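(* Let $k>1$ be an integer and let $\widetilde{\mathbb{Z}}$ be a ring elementarily equivalent to $\mathbb{Z}$. Then the group $BS(1,k,\widetilde{\mathbb{Z}})$ is a $\widetilde{\mathbb{Z}}$-group, i.e. it admits an exponentiation $G\times\widetilde{\mathbb{Z}}\to G$, $(g,\alpha)\mapsto g^\alpha$, satisfying: (1) $g^1=g$, $g^0=e$ for all $g$, and $e^\alpha=e$ for all $\alpha$; (2) $g^{\alpha+\beta}=g^\alpha g^\beta$ and $g^{\alpha\beta}=(g^\alpha)^\beta$ for all $g,\alpha,\beta$; (3) $(h^{-1}gh)^\alpha=h^{-1}g^\alpha h$ for all $g,h,\alpha$; (4) if $gh=hg$ then $(gh)^\alpha=g^\alpha h^\alpha$.
   Context: Let $\widetilde{\mathbb{Z}}\equiv\mathbb{Z}$ in the ring language $\{+,\cdot,0,1\}$. The standard integers embed in $\widetilde{\mathbb{Z}}$; the formula defining the positive integers (via Lagrange's four-square theorem) defines $\widetilde{\mathbb{Z}}^+$ and an order on $\widetilde{\mathbb{Z}}$. The first-order formula defining in $\mathbb{Z}$ the exponentiation $x=y^z$ ($z\ge 0$) defines in $\widetilde{\mathbb{Z}}$ an exponentiation; in particular for the integer $k$ and $i\in\widetilde{\mathbb{Z}}$, $i\ge0$, there is a unique $k^i\in\widetilde{\mathbb{Z}}$, with $k^0=1$, $k^{i_1}k^{i_2}=k^{i_1+i_2}$. Let $S=\{k^i: i\in\widetilde{\mathbb{Z}}^+\}\cup\{1\}$ and let $\widetilde{\mathbb{Z}}[1/k^{\widetilde{\mathbb{Z}}}]=S^{-1}\widetilde{\mathbb{Z}}$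 be the ring of fractions; write $k^{-i}=1/k^i$, so $k^i$ is defined for all $i\in\widetilde{\mathbb{Z}}$. Define $BS(1,k,\widetilde{\mathbb{Z}})=\widetilde{\mathbb{Z}}[1/k^{\widetilde{\mathbb{Z}}}]\rtimes\widetilde{\mathbb{Z}}$ (additive groups), i.e. the set of pairs $(x,m)$ with $x\in\widetilde{\mathbb{Z}}[1/k^{\widetilde{\mathbb{Z}}}]$, $m\in\widetilde{\mathbb{Z}}$, and product $(x_1,m_1)(x_2,m_2)=(x_1+x_2k^{-m_1},\,m_1+m_2)$. *)

theory Defs
  imports "HOL-Algebra.Group"
begin

datatype rtm = RVar nat | RZero | ROne | RAdd rtm rtm | RMul rtm rtm
datatype rfm = REq rtm rtm | RNot rfm | RAnd rfm rfm | RExists nat rfm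

primrec rtm_eval :: "(nat \<Rightarrow> 'a::comm_ring_1) \<Rightarrow> rtm \<Rightarrow> 'a" where
  "rtm_eval e (RVar n) = e n"
| "rtm_eval e RZero = 0"
| "rtm_eval e ROne = 1"
| "rtm_eval e (RAdd s t) = rtm_eval e s + rtm_eval e t"
| "rtm_eval e (RMul s t) = rtm_eval e s * rtm_eval e t"

primrec rfm_sat :: "(nat \<Rightarrow> 'a::comm_ring_1) \<Rightarrow> rfm \<Rightarrow> bool" where
  "rfm_sat e (REq s t) = (rtm_eval e s = rtm_eval e t)"
| "rfm_sat e (RNot p) = (\<not> rfm_sat e p)"
| "rfm_sat e (RAnd p q) = (rfm_sat e p \<and> rfm_sat e q)"
| "rfm_sat e (RExists x p) = (\<exists>a. rfm_sat (e(x := a)) p)"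

primrec rtm_vars :: "rtm \<Rightarrow> nat set" where
  "rtm_vars (RVar n) = {n}"
| "rtm_vars RZero = {}"
| "rtm_vars ROne = {}"
| "rtm_vars (RAdd s t) = rtm_vars s \<union> rtm_vars t"
| "rtm_vars (RMul s t) = rtm_vars s \<union> rtm_vars t"

primrec rfm_fv :: "rfm \<Rightarrow> nat set" where
  "rfm_fv (REq s t) = rtm_vars s \<union> rtm_vars t"
| "rfm_fv (RNot p) = rfm_fv p"
| "rfm_fv (RAnd p q) = rfm_fv p \<union> rfm_fv q"
| "rfm_fv (RExists x p) = rfm_fv p - {x}"

definition rsentence :: "rfm \<Rightarrow> bool" where
  "rsentence p \<longleftrightarrow> rfm_fv p = {}"

definition elem_equiv_Z :: "'a::comm_ring_1 itself \<Rightarrow> bool" where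
  "elem_equiv_Z (_::'a itself) \<longleftrightarrow>
     (\<forall>p. rsentence p \<longrightarrow>
        ((\<forall>e::nat \<Rightarrow> 'a. rfm_sat e p) \<longleftrightarrow> (\<forall>e::nat \<Rightarrow> int. rfm_sat e p)))"

definition env3 :: "'a \<Rightarrow> 'a \<Rightarrow> 'a \<Rightarrow> nat \<Rightarrow> 'a" where
  "env3 x y z = (\<lambda>n. if n = 0 then x else if n = 1 then y else z)"

definition defines_exp_Z :: "rfm \<Rightarrow> bool" where
  "defines_exp_Z p \<longleftrightarrow> rfm_fv p \<subseteq> {0,1,2} \<and>
     (\<forall>x y z :: int. rfm_sat (env3 x y z) p \<longleftrightarrow> (0 \<le> z \<and> x = y ^ nat z))"

text \<open>Non-negativity in Z~, given by the (Lagrange four squares) formula.\<close>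
definition nonneg_t :: "'a::comm_ring_1 \<Rightarrow> bool" where
  "nonneg_t a \<longleftrightarrow> (\<exists>b c d f. a = b*b + c*c + d*d + f*f)"

definition kpow :: "rfm \<Rightarrow> int \<Rightarrow> 'a::comm_ring_1 \<Rightarrow> 'a" where
  "kpow p k i = (THE x. rfm_sat (env3 x (of_int k) i) p)"

text \<open>A pair (a,i) with i >= 0 represents a / k^i.\<close>
definition frac_reps :: "('a::comm_ring_1 \<times> 'a) set" where
  "frac_reps = {(a, i). nonneg_t i}"

definition frac_rel :: "rfm \<Rightarrow> int \<Rightarrow> 'a::comm_ring_1 \<times> 'a \<Rightarrow> 'a \<times> 'a \<Rightarrow> bool" where
  "frac_rel p k q r = (case q of (a, i) \<Rightarrow> case r of (b, j) \<Rightarrow>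
      \<exists>u. nonneg_t u \<and> kpow p k u * (a * kpow p k j - b * kpow p k i) = 0)"

definition frac_class :: "rfm \<Rightarrow> int \<Rightarrow> 'a::comm_ring_1 \<times> 'a \<Rightarrow> ('a \<times> 'a) set" where
  "frac_class p k q = {r \<in> frac_reps. frac_rel p k q r}"

definition fracs :: "rfm \<Rightarrow> int \<Rightarrow> ('a::comm_ring_1 \<times> 'a) set set" where
  "fracs p k = frac_class p k ` frac_reps"

definition frac_add :: "rfm \<Rightarrow> int \<Rightarrow> ('a::comm_ring_1 \<times> 'a) set \<Rightarrow> ('a \<times> 'a) set \<Rightarrow> ('a \<times> 'a) set" where
  "frac_add p k X Y = {r \<in> frac_reps. \<exists>a i b j. (a, i) \<in> X \<and> (b, j) \<in> Y \<and>
      frac_rel p k (a * kpow p k j + b * kpow p k i, i + j) r}"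

text \<open>Multiplication of a fraction by k^(-m), m in Z~.\<close>
definition frac_scale :: "rfm \<Rightarrow> int \<Rightarrow> 'a::comm_ring_1 \<Rightarrow> ('a \<times> 'a) set \<Rightarrow> ('a \<times> 'a) set" where
  "frac_scale p k m X = {r \<in> frac_reps. \<exists>a i. (a, i) \<in> X \<and>
      (if nonneg_t m then frac_rel p k (a, i + m) r
       else frac_rel p k (a * kpow p k (- m), i) r)}"

definition BS :: "rfm \<Rightarrow> int \<Rightarrow> (('a::comm_ring_1 \<times> 'a) set \<times> 'a) monoid" where
  "BS p k = \<lparr> carrier = fracs p k \<times> UNIV,
     mult = (\<lambda>(X1, m1) (X2, m2). (frac_add p k X1 (frac_scale p k m1 X2), m1 + m2)),
     one = (frac_class p k (0, 0), 0) \<rparr>"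

definition ring_exp_group :: "('g, 'b) monoid_scheme \<Rightarrow> ('g \<Rightarrow> 'a::comm_ring_1 \<Rightarrow> 'g) \<Rightarrow> bool" where
  "ring_exp_group G pw \<longleftrightarrow> group G \<and>
    (\<forall>g\<in>carrier G. \<forall>\<alpha>. pw g \<alpha> \<in> carrier G) \<and>
    (\<forall>g\<in>carrier G. pw g 1 = g \<and> pw g 0 = \<one>\<^bsub>G\<^esub>) \<and>
    (\<forall>\<alpha>. pw \<one>\<^bsub>G\<^esub> \<alpha> = \<one>\<^bsub>G\<^esub>) \<and>
    (\<forall>g\<in>carrier G. \<forall>\<alpha> \<beta>. pw g (\<alpha> + \<beta>) = pw g \<alpha> \<otimes>\<^bsub>G\<^esub> pw g \<beta> \<and>
                          pw g (\<alpha> * \<beta>) = pw (pw g \<alpha>) \<beta>) \<and>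
    (\<forall>g\<in>carrier G. \<forall>h\<in>carrier G. \<forall>\<alpha>.
        pw (inv\<^bsub>G\<^esub> h \<otimes>\<^bsub>G\<^esub> g \<otimes>\<^bsub>G\<^esub> h) \<alpha> = inv\<^bsub>G\<^esub> h \<otimes>\<^bsub>G\<^esub> pw g \<alpha> \<otimes>\<^bsub>G\<^esub> h) \<and>
    (\<forall>g\<in>carrier G. \<forall>h\<in>carrier G. \<forall>\<alpha>.
        g \<otimes>\<^bsub>G\<^esub> h = h \<otimes>\<^bsub>G\<^esub> g \<longrightarrow> pw (g \<otimes>\<^bsub>G\<^esub> h) \<alpha> = pw g \<alpha> \<otimes>\<^bsub>G\<^esub> pw h \<alpha>)"

end

theory Submission
  imports Defs "HOL-Computational_Algebra.Primes"
begin


definition S4 :: "int \<Rightarrow> bool" where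
  "S4 n \<longleftrightarrow> (\<exists>a b c d. n = a*a + b*b + c*c + d*d)"

lemma euler4:
  fixes x1 x2 x3 x4 y1 y2 y3 y4 :: "'a::comm_ring_1"
  shows "(x1*x1+x2*x2+x3*x3+x4*x4)*(y1*y1+y2*y2+y3*y3+y4*y4) =
   (x1*y1+x2*y2+x3*y3+x4*y4)*(x1*y1+x2*y2+x3*y3+x4*y4)
 + (x1*y2 - x2*y1 + x3*y4 - x4*y3)*(x1*y2 - x2*y1 + x3*y4 - x4*y3)
 + (x1*y3 - x3*y1 + x4*y2 - x2*y4)*(x1*y3 - x3*y1 + x4*y2 - x2*y4)
 + (x1*y4 - x4*y1 + x2*y3 - x3*y2)*(x1*y4 - x4*y1 + x2*y3 - x3*y2)"
  by (simp add: algebra_simps)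

lemma S4_mult: "S4 a \<Longrightarrow> S4 b \<Longrightarrow> S4 (a*b)"
  unfolding S4_def using euler4 by metis

lemma yb:
  fixes y m q :: int
  assumes "m > 0" "q = m div 2" "-q \<le> y" "y \<le> m - 1 - q"
  shows "4*(y*y) \<le> m*m" "4*(y*y) = m*m \<Longrightarrow> y = -q \<and> m = 2*q"
proof -
  have q1: "2*q \<le> m" "m - 1 \<le> 2*q" using assms(1,2) by auto
  have a: "2*\<bar>y\<bar> \<le> m" using assms q1 by auto
  have "(2*\<bar>y\<bar>)*(2*\<bar>y\<bar>) \<le> m*m" using a mult_mono[OF a a] assms(1) by auto
  then show "4*(y*y) \<le> m*m" by (simp add: abs_mult_self_eq algebra_simps)
  show "y = -q \<and> m = 2*q" if h: "4*(y*y) = m*m"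
  proof -
    have "(2*\<bar>y\<bar>)*(2*\<bar>y\<bar>) = m*m" using h by (simp add: abs_mult_self_eq algebra_simps)
    then have "(2*\<bar>y\<bar> - m)*(2*\<bar>y\<bar> + m) = 0" by (simp add: algebra_simps)
    moreover have "2*\<bar>y\<bar> + m \<noteq> 0" using assms(1) by simp
    ultimately have "2*\<bar>y\<bar> = m" by simp
    then show "y = -q \<and> m = 2*q" using assms q1 by (cases "y \<ge> 0") auto
  qed
qed

lemma dvd_prime_contra:
  fixes m p :: int
  assumes "prime p" "1 < m" "m < p" "p = m * c"
  shows False
proof -
  have "m dvd p" using assms(4) by simp
  moreover have "\<forall>m. m \<ge> 0 \<and> m dvd p \<longrightarrow> m = 1 \<or> m = p" using assms(1) prime_int_iff by blast
  ultimately have "m = 1 \<or> m = p" using assms(2) by (meson less_le_not_le zero_less_one order.strict_trans)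
  then show False using assms by auto
qed

lemma descent:
  fixes p m x1 x2 x3 x4 :: int
  assumes pr: "prime p" and m1: "1 < m" and mp: "m < p"
    and sx: "m*p = x1*x1+x2*x2+x3*x3+x4*x4"
  shows "\<exists>r. 0 < r \<and> r < m \<and> S4 (r*p)"
proof -
  define q where "q = m div 2"
  define t1 where "t1 = (x1 + q) div m"
  define t2 where "t2 = (x2 + q) div m"
  define t3 where "t3 = (x3 + q) div m"
  define t4 where "t4 = (x4 + q) div m"
  define y1 where "y1 = x1 - m*t1"
  define y2 where "y2 = x2 - m*t2"
  define y3 where "y3 = x3 - m*t3"
  define y4 where "y4 = x4 - m*t4"
  have m0: "m > 0" using m1 by simp
  have yr: "\<And>x t y. t = (x + q) div m \<Longrightarrow> y = x - m*t \<Longrightarrow> -q \<le> y \<and> y \<le> m - 1 - q"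
  proof -
    fix x t y assume "t = (x + q) div m" "y = x - m*t"
    moreover have "(x + q) mod m = x + q - m * ((x+q) div m)" by (rule minus_mult_div_eq_mod[symmetric])
    ultimately have "y = (x + q) mod m - q" by simp
    moreover have "0 \<le> (x+q) mod m" "(x+q) mod m < m" using m0 by auto
    ultimately show "-q \<le> y \<and> y \<le> m - 1 - q" by auto
  qed
  have b1: "-q \<le> y1 \<and> y1 \<le> m - 1 - q" using yr t1_def y1_def by blast
  have b2: "-q \<le> y2 \<and> y2 \<le> m - 1 - q" using yr t2_def y2_def by blast
  have b3: "-q \<le> y3 \<and> y3 \<le> m - 1 - q" using yr t3_def y3_def by blast
  have b4: "-q \<le> y4 \<and> y4 \<le> m - 1 - q" using yr t4_def y4_def by blast
  define r where "r = p - 2*(x1*t1+x2*t2+x3*t3+x4*t4) + m*(t1*t1+t2*t2+t3*t3+t4*t4)"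
  have mr: "m*r = y1*y1+y2*y2+y3*y3+y4*y4"
  proof -
    have "m*r = m*p - 2*m*(x1*t1+x2*t2+x3*t3+x4*t4) + m*m*(t1*t1+t2*t2+t3*t3+t4*t4)"
      unfolding r_def by (simp add: algebra_simps)
    also have "\<dots> = (x1*x1+x2*x2+x3*x3+x4*x4) - 2*m*(x1*t1+x2*t2+x3*t3+x4*t4) + m*m*(t1*t1+t2*t2+t3*t3+t4*t4)"
      by (simp only: sx)
    also have "\<dots> = y1*y1+y2*y2+y3*y3+y4*y4"
      unfolding y1_def y2_def y3_def y4_def by (simp add: algebra_simps)
    finally show ?thesis .
  qed
  have c1: "4*(y1*y1) \<le> m*m" using yb(1)[OF m0 q_def] b1 by auto
  have c2: "4*(y2*y2) \<le> m*m" using yb(1)[OF m0 q_def] b2 by auto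
  have c3: "4*(y3*y3) \<le> m*m" using yb(1)[OF m0 q_def] b3 by auto
  have c4: "4*(y4*y4) \<le> m*m" using yb(1)[OF m0 q_def] b4 by auto
  have "m*r \<le> m*m" using c1 c2 c3 c4 mr by linarith
  then have rm: "r \<le> m" using m0 by simp
  have "0 \<le> m*r" unfolding mr by simp
  then have r0: "0 \<le> r" using m0 by (simp add: zero_le_mult_iff)
  show ?thesis
  proof (cases "r = 0")
    case True
    then have "y1*y1+y2*y2+y3*y3+y4*y4 = 0" using mr by simp
    moreover have "y1*y1 \<ge> 0" "y2*y2 \<ge> 0" "y3*y3 \<ge> 0" "y4*y4 \<ge> 0" by simp_all
    ultimately have "y1*y1 = 0" "y2*y2 = 0" "y3*y3 = 0" "y4*y4 = 0" by linarith+
    then have "y1 = 0" "y2 = 0" "y3 = 0" "y4 = 0" by simp_all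
    then have "m*p = m*(m*(t1*t1+t2*t2+t3*t3+t4*t4))" using sx
      unfolding y1_def y2_def y3_def y4_def by (simp add: algebra_simps)
    then have "p = m*(t1*t1+t2*t2+t3*t3+t4*t4)" using m0 by simp
    then show ?thesis using dvd_prime_contra[OF pr m1 mp] by blast
  next
    case rn0: False
    show ?thesis
    proof (cases "r = m")
      case True
      then have "4*(y1*y1) = m*m" "4*(y2*y2) = m*m" "4*(y3*y3) = m*m" "4*(y4*y4) = m*m"
        using c1 c2 c3 c4 mr[unfolded True] by linarith+
      then have e1: "y1 = -q" "m = 2*q" and e2: "y2 = -q" and e3: "y3 = -q" and e4: "y4 = -q"
        using yb(2)[OF m0 q_def] b1 b2 b3 b4 by auto
      have "x1 = m*t1 - q" "x2 = m*t2 - q" "x3 = m*t3 - q" "x4 = m*t4 - q"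
        using e1 e2 e3 e4 unfolding y1_def y2_def y3_def y4_def by simp_all
      then have "m*p = (m*t1 - q)*(m*t1 - q) + (m*t2 - q)*(m*t2 - q) + (m*t3 - q)*(m*t3 - q) + (m*t4 - q)*(m*t4 - q)"
        using sx by simp
      then have "2*q*p = 2*q*(2*q*(t1*t1+t2*t2+t3*t3+t4*t4 - t1 - t2 - t3 - t4 + 1))"
        using e1(2) by (simp add: algebra_simps)
      then have "p = m*(t1*t1+t2*t2+t3*t3+t4*t4 - t1 - t2 - t3 - t4 + 1)"
        using m0 e1(2) by simp
      then show ?thesis using dvd_prime_contra[OF pr m1 mp] by blast
    next
      case False
      then have rlt: "0 < r" "r < m" using rn0 r0 rm by auto
      define w1 where "w1 = p - (x1*t1+x2*t2+x3*t3+x4*t4)"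
      define w2 where "w2 = x2*t1 - x1*t2 + x4*t3 - x3*t4"
      define w3 where "w3 = x3*t1 - x1*t3 + x2*t4 - x4*t2"
      define w4 where "w4 = x4*t1 - x1*t4 + x3*t2 - x2*t3"
      have z1: "x1*y1+x2*y2+x3*y3+x4*y4 = m*w1"
      proof -
        have "x1*y1+x2*y2+x3*y3+x4*y4 = (x1*x1+x2*x2+x3*x3+x4*x4) - m*(x1*t1+x2*t2+x3*t3+x4*t4)"
          unfolding y1_def y2_def y3_def y4_def by (simp add: algebra_simps)
        also have "\<dots> = m*p - m*(x1*t1+x2*t2+x3*t3+x4*t4)" by (simp only: sx)
        finally show ?thesis unfolding w1_def by (simp add: algebra_simps)
      qed
      have z2: "x1*y2 - x2*y1 + x3*y4 - x4*y3 = m*w2"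
        unfolding w2_def y1_def y2_def y3_def y4_def by (simp add: algebra_simps)
      have z3: "x1*y3 - x3*y1 + x4*y2 - x2*y4 = m*w3"
        unfolding w3_def y1_def y2_def y3_def y4_def by (simp add: algebra_simps)
      have z4: "x1*y4 - x4*y1 + x2*y3 - x3*y2 = m*w4"
        unfolding w4_def y1_def y2_def y3_def y4_def by (simp add: algebra_simps)
      have "(m*p)*(m*r) = (m*w1)*(m*w1)+(m*w2)*(m*w2)+(m*w3)*(m*w3)+(m*w4)*(m*w4)"
        unfolding sx mr z1[symmetric] z2[symmetric] z3[symmetric] z4[symmetric] by (rule euler4)
      then have "(m*m)*(p*r) = (m*m)*(w1*w1+w2*w2+w3*w3+w4*w4)" by (simp add: algebra_simps)
      then have "r*p = w1*w1+w2*w2+w3*w3+w4*w4" using m0 by (simp add: mult.commute)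
      then show ?thesis using rlt unfolding S4_def by blast
    qed
  qed
qed


lemma small_dvd_zero:
  fixes p d :: int
  assumes "p dvd d" "\<bar>d\<bar> < p" shows "d = 0"
proof (rule ccontr)
  assume "d \<noteq> 0"
  then have "\<bar>p\<bar> \<le> \<bar>d\<bar>" using assms(1) dvd_imp_le_int by blast
  then show False using assms(2) by simp
qed

lemma sq_inj_mod:
  fixes p x x' :: int
  assumes pr: "prime p" and h: "2*h < p" and x: "0 \<le> x" "x \<le> h" and x': "0 \<le> x'" "x' \<le> h"
    and d: "p dvd (x*x - x'*x')"
  shows "x = x'"
proof -
  have "x*x - x'*x' = (x - x')*(x + x')" by (simp add: algebra_simps)
  then have "p dvd (x - x') \<or> p dvd (x + x')" using d pr prime_dvd_mult_iff by metis
  then show ?thesis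
  proof
    assume "p dvd (x - x')"
    moreover have "\<bar>x - x'\<bar> < p" using x x' h by auto
    ultimately show ?thesis using small_dvd_zero by fastforce
  next
    assume "p dvd (x + x')"
    moreover have "\<bar>x + x'\<bar> < p" using x x' h by auto
    ultimately have "x + x' = 0" using small_dvd_zero by blast
    then show ?thesis using x x' by auto
  qed
qed

lemma prime_sq_sum:
  fixes p :: int
  assumes pr: "prime p" and odd: "odd p"
  shows "\<exists>x y. 0 \<le> x \<and> x \<le> (p - 1) div 2 \<and> 0 \<le> y \<and> y \<le> (p - 1) div 2 \<and> p dvd (x*x + y*y + 1)"
proof -
  define h where "h = (p - 1) div 2"
  obtain k where k: "p = 2*k + 1" using odd by (auto elim: oddE)
  have p2: "p = 2*h + 1" unfolding h_def k by simp
  have p0: "p > 1" using pr prime_gt_1_int by blast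
  define A where "A = (\<lambda>x. (x*x) mod p) ` {0..h}"
  define B where "B = (\<lambda>y. (-1 - y*y) mod p) ` {0..h}"
  have hp: "2*h < p" using p2 by simp
  have iA: "inj_on (\<lambda>x. (x*x) mod p) {0..h}"
  proof (rule inj_onI)
    fix x x' assume a: "x \<in> {0..h}" "x' \<in> {0..h}" "(x*x) mod p = (x'*x') mod p"
    then have "p dvd (x*x - x'*x')" by (simp add: mod_eq_dvd_iff)
    moreover have "0 \<le> x" "x \<le> h" "0 \<le> x'" "x' \<le> h" using a by auto
    ultimately show "x = x'" using sq_inj_mod[OF pr hp] by blast
  qed
  have iB: "inj_on (\<lambda>y. (-1 - y*y) mod p) {0..h}"
  proof (rule inj_onI)
    fix x x' assume a: "x \<in> {0..h}" "x' \<in> {0..h}" "(-1 - x*x) mod p = (-1 - x'*x') mod p"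
    then have "p dvd ((-1 - x*x) - (-1 - x'*x'))" by (simp add: mod_eq_dvd_iff)
    then have "p dvd (x'*x' - x*x)" by (simp add: algebra_simps)
    moreover have "0 \<le> x" "x \<le> h" "0 \<le> x'" "x' \<le> h" using a by auto
    ultimately have "x' = x" using sq_inj_mod[OF pr hp] by blast
    then show "x = x'" by simp
  qed
  have cA: "card A = nat (h + 1)" unfolding A_def using card_image[OF iA] by simp
  have cB: "card B = nat (h + 1)" unfolding B_def using card_image[OF iB] by simp
  have sub: "A \<union> B \<subseteq> {0..<p}" unfolding A_def B_def using p0 by (auto intro: pos_mod_bound pos_mod_sign)
  have "A \<inter> B \<noteq> {}"
  proof
    assume "A \<inter> B = {}"
    then have "card (A \<union> B) = card A + card B" by (simp add: card_Un_disjoint A_def B_def)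
    moreover have "card (A \<union> B) \<le> card {0..<p}" using sub by (intro card_mono) auto
    ultimately have "nat (h+1) + nat (h+1) \<le> nat p" using cA cB by simp
    moreover have "h \<ge> 0" using p0 p2 by simp
    ultimately show False using p2 by linarith
  qed
  then obtain x y where xy: "x \<in> {0..h}" "y \<in> {0..h}" "(x*x) mod p = (-1 - y*y) mod p"
    unfolding A_def B_def by blast
  then have "p dvd (x*x - (-1 - y*y))" by (simp add: mod_eq_dvd_iff)
  then have "p dvd (x*x + y*y + 1)" by (simp add: algebra_simps)
  then show ?thesis using xy unfolding h_def by auto
qed

lemma prime_S4_aux:
  fixes p :: int
  assumes pr: "prime p"
  shows "0 < m \<Longrightarrow> m < p \<Longrightarrow> S4 (m*p) \<Longrightarrow> S4 p"
proof (induction "nat m" arbitrary: m rule: less_induct)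
  case less
  show ?case
  proof (cases "m = 1")
    case True then show ?thesis using less.prems by simp
  next
    case False
    then have m1: "1 < m" using less.prems by simp
    obtain x1 x2 x3 x4 where "m*p = x1*x1+x2*x2+x3*x3+x4*x4" using less.prems(3) unfolding S4_def by blast
    then obtain r where r: "0 < r" "r < m" "S4 (r*p)" using descent[OF pr m1 less.prems(2)] by blast
    have "nat r < nat m" using r by simp
    then show ?thesis using less.hyps r less.prems by force
  qed
qed

lemma prime_S4:
  fixes p :: int
  assumes pr: "prime p"
  shows "S4 p"
proof (cases "p = 2")
  case True
  then show ?thesis unfolding S4_def by (rule_tac x=1 in exI, rule_tac x=1 in exI, rule_tac x=0 in exI, rule_tac x=0 in exI) simp
next
  case False
  have "p > 2" using False prime_ge_2_int[OF pr] by simp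
  then have odd: "odd p" by (rule prime_odd_int[OF pr])
  define h where "h = (p - 1) div 2"
  obtain k where k: "p = 2*k + 1" using odd by (auto elim: oddE)
  have p2: "p = 2*h + 1" unfolding h_def k by simp
  obtain x y where xy: "0 \<le> x" "x \<le> h" "0 \<le> y" "y \<le> h" "p dvd (x*x + y*y + 1)"
    using prime_sq_sum[OF pr odd] unfolding h_def by blast
  obtain m where m: "x*x + y*y + 1 = p*m" using xy(5) by (auto elim: dvdE)
  have h1: "h \<ge> 1" using \<open>p > 2\<close> p2 by simp
  have "x*x \<le> h*h" using mult_mono[OF xy(2) xy(2)] xy(1,2) by simp
  moreover have "y*y \<le> h*h" using mult_mono[OF xy(4) xy(4)] xy(3,4) by simp
  moreover have "p*p = 4*(h*h) + 4*h + 1" unfolding p2 by (simp add: algebra_simps)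
  moreover have "h*h \<ge> 0" by simp
  ultimately have "p*m < p*p" using m h1 by linarith
  then have mp: "m < p" using \<open>p > 2\<close> by simp
  have "x*x \<ge> 0" "y*y \<ge> 0" by simp_all
  then have "0 < p*m" using m by linarith
  then have "0 < m" using \<open>p > 2\<close> by (simp add: zero_less_mult_iff)
  moreover have "S4 (m*p)" unfolding S4_def using m
    by (rule_tac x=x in exI, rule_tac x=y in exI, rule_tac x=1 in exI, rule_tac x=0 in exI) (simp add: mult.commute)
  ultimately show ?thesis using prime_S4_aux[OF pr] mp by blast
qed

lemma lagrange4:
  fixes n :: int
  shows "0 \<le> n \<Longrightarrow> S4 n"
proof (induction "nat n" arbitrary: n rule: less_induct)
  case less
  show ?case
  proof (cases "n = 0 \<or> n = 1")
    case True
    then show ?thesis unfolding S4_def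
      by (rule_tac x=n in exI, rule_tac x=0 in exI, rule_tac x=0 in exI, rule_tac x=0 in exI) auto
  next
    case False
    then have n1: "n > 1" using less.prems by simp
    then obtain p where p: "p dvd n" "prime p" using prime_divisor_exists[of n] by auto
    have p1: "p \<ge> 2" using p(2) prime_ge_2_int by blast
    obtain c where c: "n = p*c" using p(1) by (auto elim: dvdE)
    have "0 < p*c" using c n1 by simp
    then have c0: "c > 0" using p1 by (simp add: zero_less_mult_iff)
    have "2*c \<le> p*c" using p1 c0 by (simp add: mult_right_mono)
    then have "c < n" using c c0 by linarith
    then have "S4 c" using less.hyps c0 by force
    then show ?thesis using c prime_S4[OF p(2)] S4_mult by simp
  qed
qed


lemma rtm_eval_cong: "(\<forall>v\<in>rtm_vars t. e v = e' v) \<Longrightarrow> rtm_eval e t = rtm_eval e' t"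
  by (induction t) auto

lemma rfm_sat_cong: "(\<forall>v\<in>rfm_fv f. e v = e' v) \<Longrightarrow> rfm_sat e f = rfm_sat e' f"
proof (induction f arbitrary: e e')
  case (REq s t) then show ?case using rtm_eval_cong[of s e e'] rtm_eval_cong[of t e e'] by simp
next
  case (RNot f) then show ?case by simp
next
  case (RAnd f g)
  have "rfm_sat e f = rfm_sat e' f" using RAnd.prems by (intro RAnd.IH(1)) auto
  moreover have "rfm_sat e g = rfm_sat e' g" using RAnd.prems by (intro RAnd.IH(2)) auto
  ultimately show ?case by simp
next
  case (RExists x f)
  have "\<And>a. rfm_sat (e(x := a)) f = rfm_sat (e'(x := a)) f"
    using RExists by (intro RExists.IH) auto
  then show ?case by simp
qed

definition RAll :: "nat \<Rightarrow> rfm \<Rightarrow> rfm" where "RAll x f = RNot (RExists x (RNot f))"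
definition RImp :: "rfm \<Rightarrow> rfm \<Rightarrow> rfm" where "RImp f g = RNot (RAnd f (RNot g))"
definition ROr :: "rfm \<Rightarrow> rfm \<Rightarrow> rfm" where "ROr f g = RNot (RAnd (RNot f) (RNot g))"

lemma sat_RAll[simp]: "rfm_sat e (RAll x f) = (\<forall>a. rfm_sat (e(x := a)) f)"
  by (simp add: RAll_def)
lemma sat_RImp[simp]: "rfm_sat e (RImp f g) = (rfm_sat e f \<longrightarrow> rfm_sat e g)"
  by (simp add: RImp_def)
lemma sat_ROr[simp]: "rfm_sat e (ROr f g) = (rfm_sat e f \<or> rfm_sat e g)"
  by (simp add: ROr_def)
lemma fv_RAll[simp]: "rfm_fv (RAll x f) = rfm_fv f - {x}" by (simp add: RAll_def)
lemma fv_RImp[simp]: "rfm_fv (RImp f g) = rfm_fv f \<union> rfm_fv g" by (simp add: RImp_def)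
lemma fv_ROr[simp]: "rfm_fv (ROr f g) = rfm_fv f \<union> rfm_fv g" by (simp add: ROr_def)

primrec rnum :: "nat \<Rightarrow> rtm" where
  "rnum 0 = RZero"
| "rnum (Suc n) = RAdd (rnum n) ROne"

lemma rnum_eval[simp]: "rtm_eval e (rnum n) = of_nat n" by (induction n) auto
lemma rnum_vars[simp]: "rtm_vars (rnum n) = {}" by (induction n) auto

definition PF :: "rfm \<Rightarrow> rtm \<Rightarrow> rtm \<Rightarrow> rtm \<Rightarrow> rfm" where
  "PF p a b c = RExists 0 (RExists 1 (RExists 2
     (RAnd (REq (RVar 0) a) (RAnd (REq (RVar 1) b) (RAnd (REq (RVar 2) c) p)))))"

lemma fv_PF[simp]: "rfm_fv p \<subseteq> {0,1,2} \<Longrightarrow>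
   rfm_fv (PF p a b c) = (rtm_vars a \<union> rtm_vars b \<union> rtm_vars c) - {0,1,2}"
  unfolding PF_def by auto

lemma sat_PF[simp]:
  assumes "rfm_fv p \<subseteq> {0,1,2}" "rtm_vars a \<inter> {0,1,2} = {}" "rtm_vars b \<inter> {0,1,2} = {}"
    "rtm_vars c \<inter> {0,1,2} = {}"
  shows "rfm_sat e (PF p a b c) = rfm_sat (env3 (rtm_eval e a) (rtm_eval e b) (rtm_eval e c)) p"
proof -
  have ev: "\<And>t x y z. rtm_vars t \<inter> {0,1,2} = {} \<Longrightarrow> rtm_eval (e(0 := x, 1 := y, 2 := z)) t = rtm_eval e t"
    by (rule rtm_eval_cong) auto
  have sp: "\<And>x y z. rfm_sat (e(0 := x, 1 := y, 2 := z)) p = rfm_sat (env3 x y z) p"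
    by (rule rfm_sat_cong) (use assms(1) in \<open>auto simp: env3_def\<close>)
  show ?thesis unfolding PF_def using ev[OF assms(2)] ev[OF assms(3)] ev[OF assms(4)] sp
    by simp
qed

definition NF :: "rtm \<Rightarrow> rfm" where
  "NF t = RExists 10 (RExists 11 (RExists 12 (RExists 13 (REq t
     (RAdd (RAdd (RAdd (RMul (RVar 10) (RVar 10)) (RMul (RVar 11) (RVar 11)))
        (RMul (RVar 12) (RVar 12))) (RMul (RVar 13) (RVar 13)))))))"

definition NFneg :: "rtm \<Rightarrow> rfm" where
  "NFneg t = RExists 10 (RExists 11 (RExists 12 (RExists 13 (REq RZero (RAdd t
     (RAdd (RAdd (RAdd (RMul (RVar 10) (RVar 10)) (RMul (RVar 11) (RVar 11)))
        (RMul (RVar 12) (RVar 12))) (RMul (RVar 13) (RVar 13))))))))"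

lemma fv_NF[simp]: "rfm_fv (NF t) = rtm_vars t - {10,11,12,13}" unfolding NF_def by auto
lemma fv_NFneg[simp]: "rfm_fv (NFneg t) = rtm_vars t - {10,11,12,13}" unfolding NFneg_def by auto

lemma sat_NF[simp]:
  assumes "rtm_vars t \<inter> {10,11,12,13} = {}"
  shows "rfm_sat e (NF t) = nonneg_t (rtm_eval e t)"
proof -
  have ev: "\<And>a b c d. rtm_eval (e(10 := a, 11 := b, 12 := c, 13 := d)) t = rtm_eval e t"
    by (rule rtm_eval_cong) (use assms in auto)
  show ?thesis unfolding NF_def nonneg_t_def using ev by simp
qed

lemma sat_NFneg[simp]:
  assumes "rtm_vars t \<inter> {10,11,12,13} = {}"
  shows "rfm_sat e (NFneg t) = nonneg_t (- rtm_eval e t)"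
proof -
  have ev: "\<And>a b c d. rtm_eval (e(10 := a, 11 := b, 12 := c, 13 := d)) t = rtm_eval e t"
    by (rule rtm_eval_cong) (use assms in auto)
  have "\<And>x s::'a. (0 = x + s) = (- x = s)" by (metis add.commute add_eq_0_iff minus_unique)
  then show ?thesis unfolding NF_def NFneg_def nonneg_t_def using ev by simp
qed

lemma nonneg_int: "nonneg_t (x::int) \<longleftrightarrow> 0 \<le> x"
proof
  assume "nonneg_t x" then show "0 \<le> x" unfolding nonneg_t_def
    by (auto intro!: add_nonneg_nonneg)
next
  assume "0 \<le> x" then show "nonneg_t x" using lagrange4 unfolding S4_def nonneg_t_def by blast
qed

lemma transfer_sent:
  assumes "elem_equiv_Z TYPE('a::comm_ring_1)" "rsentence f" "\<forall>e::nat \<Rightarrow> int. rfm_sat e f"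
  shows "rfm_sat (e::nat \<Rightarrow> 'a) f"
  using assms unfolding elem_equiv_Z_def by blast


context
  fixes p :: rfm and k :: int
  assumes k1: "k > 1"
    and ee: "elem_equiv_Z TYPE('a::comm_ring_1)"
    and dp: "defines_exp_Z p"
begin

lemma fvp[simp]: "rfm_fv p \<subseteq> {0,1,2}" using dp unfolding defines_exp_Z_def by blast

lemma Pint[simp]: "rfm_sat (env3 x y z) p \<longleftrightarrow> 0 \<le> z \<and> x = y ^ nat (z::int)"
  using dp unfolding defines_exp_Z_def by blast

lemmas satPF = sat_PF[OF fvp]
lemmas fvPF = fv_PF[OF fvp]

lemma K_eq: "(of_nat (nat k) :: 'b::comm_ring_1) = of_int k" using k1 by simp

abbreviation "kt \<equiv> rnum (nat k)"

lemma F1: "\<forall>a b::'a. a*b = 0 \<longrightarrow> a = 0 \<or> b = 0"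
proof -
  define f where "f = RAll 3 (RAll 4 (RImp (REq (RMul (RVar 3) (RVar 4)) RZero)
                     (ROr (REq (RVar 3) RZero) (REq (RVar 4) RZero))))"
  have s: "rsentence f" unfolding f_def rsentence_def by (auto simp: fvPF)
  have "\<forall>e::nat\<Rightarrow>int. rfm_sat e f" unfolding f_def by (simp add: satPF)
  from transfer_sent[OF ee s this] have "rfm_sat (\<lambda>_. 0::'a) f" .
  then show ?thesis unfolding f_def by (simp add: satPF)
qed

lemma F2: "\<forall>i::'a. nonneg_t i \<longrightarrow> (\<exists>x. rfm_sat (env3 x (of_int k) i) p)"
proof -
  define f where "f = RAll 3 (RImp (NF (RVar 3)) (RExists 4 (PF p (RVar 4) kt (RVar 3))))"
  have s: "rsentence f" unfolding f_def rsentence_def by (auto simp: fvPF)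
  have "\<forall>e::nat\<Rightarrow>int. rfm_sat e f" unfolding f_def by (simp add: nonneg_int satPF)
  from transfer_sent[OF ee s this] have "rfm_sat (\<lambda>_. 0::'a) f" .
  then show ?thesis unfolding f_def by (simp add: K_eq satPF)
qed

lemma F3: "\<forall>i x y::'a. rfm_sat (env3 x (of_int k) i) p \<longrightarrow> rfm_sat (env3 y (of_int k) i) p \<longrightarrow> x = y"
proof -
  define f where "f = RAll 3 (RAll 4 (RAll 5 (RImp (PF p (RVar 4) kt (RVar 3))
         (RImp (PF p (RVar 5) kt (RVar 3)) (REq (RVar 4) (RVar 5))))))"
  have s: "rsentence f" unfolding f_def rsentence_def by (auto simp: fvPF)
  have "\<forall>e::nat\<Rightarrow>int. rfm_sat e f" unfolding f_def by (simp add: satPF)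
  from transfer_sent[OF ee s this] have "rfm_sat (\<lambda>_. 0::'a) f" .
  then show ?thesis unfolding f_def by (simp add: K_eq satPF)
qed


lemma F4: "rfm_sat (env3 (1::'a) (of_int k) 0) p"
proof -
  define f where "f = PF p ROne kt RZero"
  have s: "rsentence f" unfolding f_def rsentence_def by (auto simp: fvPF)
  have "\<forall>e::nat\<Rightarrow>int. rfm_sat e f" unfolding f_def by (simp add: satPF)
  from transfer_sent[OF ee s this] have "rfm_sat (\<lambda>_. 0::'a) f" .
  then show ?thesis unfolding f_def by (simp add: K_eq satPF)
qed

lemma F5: "\<forall>i j x y::'a. nonneg_t i \<longrightarrow> nonneg_t j \<longrightarrow> rfm_sat (env3 x (of_int k) i) p \<longrightarrow>
   rfm_sat (env3 y (of_int k) j) p \<longrightarrow> rfm_sat (env3 (x*y) (of_int k) (i+j)) p"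
proof -
  define f where "f = RAll 3 (RAll 4 (RAll 5 (RAll 6 (RImp (NF (RVar 3)) (RImp (NF (RVar 4))
     (RImp (PF p (RVar 5) kt (RVar 3)) (RImp (PF p (RVar 6) kt (RVar 4))
       (PF p (RMul (RVar 5) (RVar 6)) kt (RAdd (RVar 3) (RVar 4))))))))))"
  have s: "rsentence f" unfolding f_def rsentence_def by (auto simp: fvPF)
  have "\<forall>e::nat\<Rightarrow>int. rfm_sat e f" unfolding f_def by (simp add: satPF nonneg_int nat_add_distrib power_add)
  from transfer_sent[OF ee s this] have "rfm_sat (\<lambda>_. 0::'a) f" .
  then show ?thesis unfolding f_def by (simp add: K_eq satPF)
qed

lemma F6: "\<forall>i::'a. nonneg_t i \<longrightarrow> \<not> rfm_sat (env3 0 (of_int k) i) p"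
proof -
  define f where "f = RAll 3 (RImp (NF (RVar 3)) (RNot (PF p RZero kt (RVar 3))))"
  have s: "rsentence f" unfolding f_def rsentence_def by (auto simp: fvPF)
  have "\<forall>e::nat\<Rightarrow>int. rfm_sat e f" unfolding f_def using k1 by (simp add: satPF nonneg_int)
  from transfer_sent[OF ee s this] have "rfm_sat (\<lambda>_. 0::'a) f" .
  then show ?thesis unfolding f_def by (simp add: K_eq satPF)
qed

lemma F7: "\<forall>a::'a. nonneg_t a \<or> nonneg_t (-a)"
proof -
  define f where "f = RAll 3 (ROr (NF (RVar 3)) (NFneg (RVar 3)))"
  have s: "rsentence f" unfolding f_def rsentence_def by auto
  have "\<forall>e::nat\<Rightarrow>int. rfm_sat e f" unfolding f_def by (auto simp: nonneg_int)
  from transfer_sent[OF ee s this] have "rfm_sat (\<lambda>_. 0::'a) f" .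
  then show ?thesis unfolding f_def by simp
qed

lemma F8: "\<forall>a::'a. nonneg_t a \<longrightarrow> nonneg_t (-a) \<longrightarrow> a = 0"
proof -
  define f where "f = RAll 3 (RImp (NF (RVar 3)) (RImp (NFneg (RVar 3)) (REq (RVar 3) RZero)))"
  have s: "rsentence f" unfolding f_def rsentence_def by auto
  have "\<forall>e::nat\<Rightarrow>int. rfm_sat e f" unfolding f_def by (simp add: nonneg_int)
  from transfer_sent[OF ee s this] have "rfm_sat (\<lambda>_. 0::'a) f" .
  then show ?thesis unfolding f_def by simp
qed

lemma F9: "\<forall>a b::'a. nonneg_t a \<longrightarrow> nonneg_t b \<longrightarrow> nonneg_t (a+b)"
proof -
  define f where "f = RAll 3 (RAll 4 (RImp (NF (RVar 3)) (RImp (NF (RVar 4)) (NF (RAdd (RVar 3) (RVar 4))))))"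
  have s: "rsentence f" unfolding f_def rsentence_def by auto
  have "\<forall>e::nat\<Rightarrow>int. rfm_sat e f" unfolding f_def by (simp add: nonneg_int)
  from transfer_sent[OF ee s this] have "rfm_sat (\<lambda>_. 0::'a) f" .
  then show ?thesis unfolding f_def by simp
qed

lemma kpow_int_one: "k ^ n = 1 \<Longrightarrow> n = 0"
  using one_less_power[OF k1, of n] by (cases "n = 0") auto

lemma F10: "\<forall>m::'a. nonneg_t m \<longrightarrow> rfm_sat (env3 1 (of_int k) m) p \<longrightarrow> m = 0"
proof -
  define f where "f = RAll 3 (RImp (NF (RVar 3)) (RImp (PF p ROne kt (RVar 3)) (REq (RVar 3) RZero)))"
  have s: "rsentence f" unfolding f_def rsentence_def by (auto simp: fvPF)
  have "\<forall>e::nat\<Rightarrow>int. rfm_sat e f" unfolding f_def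
    using k1 kpow_int_one by (simp add: satPF nonneg_int) (metis nat_0_iff order_antisym_conv)
  from transfer_sent[OF ee s this] have "rfm_sat (\<lambda>_. 0::'a) f" .
  then show ?thesis unfolding f_def by (simp add: K_eq satPF)
qed

lemma int_div: "0 \<le> s \<Longrightarrow> 0 \<le> t \<Longrightarrow> \<exists>q. q * k ^ nat s + 1 = k ^ nat (s*t) + (q::int)"
proof -
  assume "0 \<le> s" "0 \<le> t"
  then have "k ^ nat (s*t) = (k ^ nat s) ^ nat t" by (simp add: nat_mult_distrib power_mult)
  then have "k ^ nat (s*t) - 1 = (k ^ nat s - 1) * (\<Sum>i<nat t. (k ^ nat s)^i)"
    by (simp add: power_diff_1_eq)
  then show ?thesis by (rule_tac x="\<Sum>i<nat t. (k ^ nat s)^i" in exI) (simp add: algebra_simps)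
qed

lemma F11: "\<forall>s t::'a. nonneg_t s \<longrightarrow> nonneg_t t \<longrightarrow> (\<exists>q x y. rfm_sat (env3 x (of_int k) s) p \<and>
   rfm_sat (env3 y (of_int k) (s*t)) p \<and> q*x + 1 = y + q)"
proof -
  define f where "f = RAll 3 (RAll 4 (RImp (NF (RVar 3)) (RImp (NF (RVar 4))
    (RExists 5 (RExists 6 (RExists 7 (RAnd (PF p (RVar 6) kt (RVar 3))
      (RAnd (PF p (RVar 7) kt (RMul (RVar 3) (RVar 4)))
        (REq (RAdd (RMul (RVar 5) (RVar 6)) ROne) (RAdd (RVar 7) (RVar 5)))))))))))"
  have s: "rsentence f" unfolding f_def rsentence_def by (auto simp: fvPF)
  have "\<forall>e::nat\<Rightarrow>int. rfm_sat e f" unfolding f_def using int_div k1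
    by (simp add: satPF nonneg_int)
  from transfer_sent[OF ee s this] have "rfm_sat (\<lambda>_. 0::'a) f" .
  then show ?thesis unfolding f_def by (simp add: K_eq satPF)
qed

end


definition nzd :: "'a::comm_ring_1 \<Rightarrow> bool" where
  "nzd b \<longleftrightarrow> (\<forall>x. x * b = 0 \<longrightarrow> x = 0)"

lemma nzd_one[simp]: "nzd 1" by (simp add: nzd_def)
lemma nzd_mult: "nzd b \<Longrightarrow> nzd d \<Longrightarrow> nzd (b * d)"
  unfolding nzd_def by (metis mult.assoc)
lemma nzd_cancel: "nzd b \<Longrightarrow> b * x = b * y \<Longrightarrow> x = y"
  unfolding nzd_def by (metis eq_iff_diff_eq_0 mult.commute right_diff_distrib)

definition tfracrel :: "'a::comm_ring_1 \<times> 'a \<Rightarrow> 'a \<times> 'a \<Rightarrow> bool" where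
  "tfracrel = (\<lambda>x y. nzd (snd x) \<and> nzd (snd y) \<and> fst x * snd y = fst y * snd x)"

lemma tfracrel_iff [simp]:
  "tfracrel x y \<longleftrightarrow> nzd (snd x) \<and> nzd (snd y) \<and> fst x * snd y = fst y * snd x"
  by (simp add: tfracrel_def)

lemma part_equivp_tfracrel: "part_equivp (tfracrel :: 'a::comm_ring_1 \<times> 'a \<Rightarrow> _)"
proof (rule part_equivpI)
  show "\<exists>x::'a \<times> 'a. tfracrel x x" by (rule exI[where x="(0, 1)"]) simp
  show "symp (tfracrel :: 'a \<times> 'a \<Rightarrow> _)" by (auto simp: symp_def)
  show "transp (tfracrel :: 'a \<times> 'a \<Rightarrow> _)"
  proof (rule transpI, unfold split_paired_all)
    fix a b a' b' a'' b'' :: 'a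
    assume A: "tfracrel (a, b) (a', b')"
    assume B: "tfracrel (a', b') (a'', b'')"
    have "b' * (a * b'') = b'' * (a * b')" by (simp add: ac_simps)
    also from A have "a * b' = a' * b" by auto
    also have "b'' * (a' * b) = b * (a' * b'')" by (simp add: ac_simps)
    also from B have "a' * b'' = a'' * b'" by auto
    also have "b * (a'' * b') = b' * (a'' * b)" by (simp add: ac_simps)
    finally have "b' * (a * b'') = b' * (a'' * b)" .
    moreover from B have "nzd b'" by auto
    ultimately have "a * b'' = a'' * b" using nzd_cancel[of b' "a * b''" "a'' * b"] by blast
    with A B show "tfracrel (a, b) (a'', b'')" by auto
  qed
qed

quotient_type (overloaded) 'a tfrac = "'a :: comm_ring_1 \<times> 'a" / partial: "tfracrel"
  by (rule part_equivp_tfracrel)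

lift_definition TFract :: "'a :: comm_ring_1 \<Rightarrow> 'a \<Rightarrow> 'a tfrac"
  is "\<lambda>a b. if nzd b then (a, b) else (0, 1)"
  by simp

lemma TFract_cases:
  obtains a b where "q = TFract a b" "nzd b"
  by transfer auto

lemma eq_tfract:
  shows "\<And>a b c d. nzd b \<Longrightarrow> nzd d \<Longrightarrow> TFract a b = TFract c d \<longleftrightarrow> a * d = c * b"
  by (transfer; simp)

instantiation tfrac :: (comm_ring_1) comm_ring_1
begin

lift_definition zero_tfrac :: "'a tfrac" is "(0, 1)" by simp

lemma Zero_tfrac_def: "0 = TFract 0 1"
  by transfer simp

lift_definition one_tfrac :: "'a tfrac" is "(1, 1)" by simp

lemma One_tfrac_def: "1 = TFract 1 1"
  by transfer simp

lift_definition plus_tfrac :: "'a tfrac \<Rightarrow> 'a tfrac \<Rightarrow> 'a tfrac"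
  is "\<lambda>q r. (fst q * snd r + fst r * snd q, snd q * snd r)"
proof -
  fix x y z w :: "'a \<times> 'a"
  assume "tfracrel x y" "tfracrel z w"
  then show "tfracrel (fst x * snd z + fst z * snd x, snd x * snd z) (fst y * snd w + fst w * snd y, snd y * snd w)"
    apply (cases x, cases y, cases z, cases w)
    apply (simp add: nzd_mult)
    apply (simp add: algebra_simps)
    by (metis mult.assoc mult.commute)
qed

lemma add_tfract [simp]:
  "\<lbrakk> nzd b; nzd d \<rbrakk> \<Longrightarrow> TFract a b + TFract c d = TFract (a * d + c * b) (b * d)"
  by transfer (simp add: nzd_mult)

lift_definition uminus_tfrac :: "'a tfrac \<Rightarrow> 'a tfrac"
  is "\<lambda>x. (- fst x, snd x)"
  by simp

lemma minus_tfract [simp]: "nzd b \<Longrightarrow> - TFract a b = TFract (- a) b"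
  by transfer simp

definition diff_tfrac_def: "q - r = q + - (r::'a tfrac)"

lift_definition times_tfrac :: "'a tfrac \<Rightarrow> 'a tfrac \<Rightarrow> 'a tfrac"
  is "\<lambda>q r. (fst q * fst r, snd q * snd r)"
proof -
  fix x y z w :: "'a \<times> 'a"
  assume "tfracrel x y" "tfracrel z w"
  then show "tfracrel (fst x * fst z, snd x * snd z) (fst y * fst w, snd y * snd w)"
    apply (cases x, cases y, cases z, cases w)
    apply (simp add: nzd_mult)
    by (metis mult.assoc mult.commute)
qed

lemma mult_tfract [simp]: "\<lbrakk> nzd b; nzd d \<rbrakk> \<Longrightarrow> TFract a b * TFract c d = TFract (a * c) (b * d)"
  by transfer (simp add: nzd_mult)

instance
proof
  fix q r s :: "'a tfrac"
  show "(q * r) * s = q * (r * s)"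
    by (cases q rule: TFract_cases, cases r rule: TFract_cases, cases s rule: TFract_cases)
       (simp add: eq_tfract nzd_mult algebra_simps)
  show "q * r = r * q"
    by (cases q rule: TFract_cases, cases r rule: TFract_cases) (simp add: eq_tfract nzd_mult algebra_simps)
  show "1 * q = q"
    by (cases q rule: TFract_cases) (simp add: One_tfrac_def eq_tfract)
  show "(q + r) + s = q + (r + s)"
    by (cases q rule: TFract_cases, cases r rule: TFract_cases, cases s rule: TFract_cases)
       (simp add: eq_tfract nzd_mult algebra_simps)
  show "q + r = r + q"
    by (cases q rule: TFract_cases, cases r rule: TFract_cases) (simp add: eq_tfract nzd_mult algebra_simps)
  show "0 + q = q"
    by (cases q rule: TFract_cases) (simp add: Zero_tfrac_def eq_tfract)
  show "- q + q = 0"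
    by (cases q rule: TFract_cases) (simp add: Zero_tfrac_def eq_tfract nzd_mult)
  show "q - r = q + - r"
    by (simp add: diff_tfrac_def)
  show "(q + r) * s = q * s + r * s"
    by (cases q rule: TFract_cases, cases r rule: TFract_cases, cases s rule: TFract_cases)
       (simp add: eq_tfract nzd_mult algebra_simps)
  show "(0::'a tfrac) \<noteq> 1"
    by (simp add: Zero_tfrac_def One_tfrac_def eq_tfract)
qed

end

lemma diff_tfract [simp]:
  "\<lbrakk> nzd b; nzd d \<rbrakk> \<Longrightarrow> TFract a b - TFract c d = TFract (a * d - c * b) (b * d)"
  by (simp add: diff_tfrac_def)


lemma r_comm:
  fixes x y Xa Yb um un vm vn :: "'b::comm_ring_1"
  assumes h1: "Xa*(1-um) = x*(1-vm)" and h2: "Yb*(1-un) = y*(1-vn)" and h3: "y*(1-um) = x*(1-un)"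
  shows "((Xa + vm*Yb)*(1 - um*un))*((1-um)*(1-un)) = ((x + um*y)*(1 - vm*vn))*((1-um)*(1-un))"
proof -
  have "((Xa + vm*Yb)*(1 - um*un))*((1-um)*(1-un)) =
        (Xa*(1-um))*((1-un)*(1-um*un)) + vm*(Yb*(1-un))*((1-um)*(1-um*un))"
    by (simp add: algebra_simps)
  also have "\<dots> = (x*(1-vm))*((1-un)*(1-um*un)) + vm*(y*(1-vn))*((1-um)*(1-um*un))"
    by (simp only: h1 h2)
  also have "\<dots> = (x*(1-vm))*((1-un)*(1-um*un)) + vm*(1-vn)*(y*(1-um))*(1-um*un)"
    by (simp add: algebra_simps)
  also have "\<dots> = (x*(1-vm))*((1-un)*(1-um*un)) + vm*(1-vn)*(x*(1-un))*(1-um*un)"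
    by (simp only: h3)
  also have "\<dots> = x*(1-un)*(1-um*un)*(1-vm*vn)"
    by (simp add: algebra_simps)
  finally have L: "((Xa + vm*Yb)*(1 - um*un))*((1-um)*(1-un)) = x*(1-un)*(1-um*un)*(1-vm*vn)" .
  have "((x + um*y)*(1 - vm*vn))*((1-um)*(1-un)) = (x*(1-um) + um*(y*(1-um)))*(1-un)*(1-vm*vn)"
    by (simp add: algebra_simps)
  also have "\<dots> = (x*(1-um) + um*(x*(1-un)))*(1-un)*(1-vm*vn)"
    by (simp only: h3)
  also have "\<dots> = x*(1-un)*(1-um*un)*(1-vm*vn)"
    by (simp add: algebra_simps)
  finally show ?thesis using L by simp
qed

lemma r_mul:
  fixes Z Y x u v w :: "'b::comm_ring_1"
  assumes h1: "Z*(1-v) = Y*(1-w)" and h2: "Y*(1-u) = x*(1-v)"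
  shows "(Z*(1-u))*(1-v) = (x*(1-w))*(1-v)"
proof -
  have "(Z*(1-u))*(1-v) = (Z*(1-v))*(1-u)" by (simp add: mult_ac)
  also have "\<dots> = (Y*(1-u))*(1-w)" unfolding h1 by (simp add: mult_ac)
  also have "\<dots> = (x*(1-w))*(1-v)" unfolding h2 by (simp add: mult_ac)
  finally show ?thesis .
qed

lemma r_add:
  fixes Xa Xb x u v w :: "'b::comm_ring_1"
  assumes h1: "Xa*(1-u) = x*(1-v)" and h2: "Xb*(1-u) = x*(1-w)"
  shows "(Xa + v*Xb)*(1-u) = x*(1 - v*w)"
proof -
  have "(Xa + v*Xb)*(1-u) = Xa*(1-u) + v*(Xb*(1-u))" by (simp add: algebra_simps)
  also have "\<dots> = x*(1-v) + v*(x*(1-w))" by (simp only: h1 h2)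
  also have "\<dots> = x*(1 - v*w)" by (simp add: algebra_simps)
  finally show ?thesis .
qed

lemma r_conj:
  fixes Xa x z u v un :: "'b::comm_ring_1"
  assumes h1: "Xa*(1-u) = x*(1-v)"
  shows "(un*(Xa - z + v*z))*(1-u) = (un*(x - z + u*z))*(1-v)"
proof -
  have "(un*(Xa - z + v*z))*(1-u) = un*(Xa*(1-u)) - un*z*(1-v)*(1-u)" by (simp add: algebra_simps)
  also have "\<dots> = un*(x*(1-v)) - un*z*(1-v)*(1-u)" by (simp only: h1)
  also have "\<dots> = (un*(x - z + u*z))*(1-v)" by (simp add: algebra_simps)
  finally show ?thesis .
qed

lemma r_commL:
  fixes x y Xa Yb um un vm vn :: "'b::comm_ring_1"
  assumes h1: "Xa*(1-um) = x*(1-vm)" and h2: "Yb*(1-un) = y*(1-vn)" and h3: "y*(1-um) = x*(1-un)"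
  shows "(Xa + vm*Yb)*((1-um)*(1-un)) = x*(1-un)*(1-vm*vn)"
proof -
  have "(Xa + vm*Yb)*((1-um)*(1-un)) = (Xa*(1-um))*(1-un) + vm*(Yb*(1-un))*(1-um)"
    by (simp add: algebra_simps)
  also have "\<dots> = (x*(1-vm))*(1-un) + vm*(y*(1-vn))*(1-um)"
    by (simp only: h1 h2)
  also have "\<dots> = (x*(1-vm))*(1-un) + vm*(1-vn)*(y*(1-um))"
    by (simp add: algebra_simps)
  also have "\<dots> = (x*(1-vm))*(1-un) + vm*(1-vn)*(x*(1-un))"
    by (simp only: h3)
  also have "\<dots> = x*(1-un)*(1-vm*vn)"
    by (simp add: algebra_simps)
  finally show ?thesis .
qed

lemma r_commR:
  fixes x y um un :: "'b::comm_ring_1"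
  assumes h3: "y*(1-um) = x*(1-un)"
  shows "(x + um*y)*((1-um)*(1-un)) = x*(1-un)*(1-um*un)"
proof -
  have "(x + um*y)*((1-um)*(1-un)) = (x*(1-um) + um*(y*(1-um)))*(1-un)"
    by (simp add: algebra_simps)
  also have "\<dots> = (x*(1-um) + um*(x*(1-un)))*(1-un)"
    by (simp only: h3)
  also have "\<dots> = x*(1-un)*(1-um*un)"
    by (simp add: algebra_simps)
  finally show ?thesis .
qed


context
  fixes p :: rfm and k :: int
  assumes k1: "k > 1"
    and ee: "elem_equiv_Z TYPE('a::comm_ring_1)"
    and dp: "defines_exp_Z p"
begin

lemma dom: "(a::'a)*b = 0 \<longleftrightarrow> a = 0 \<or> b = 0" using F1[OF k1 ee dp] by auto
lemma nzdI: "(b::'a) \<noteq> 0 \<Longrightarrow> nzd b" unfolding nzd_def using dom by auto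

lemma N0: "nonneg_t (0::'a)" unfolding nonneg_t_def by (rule exI[of _ 0])+ simp
lemma N1: "nonneg_t (1::'a)" unfolding nonneg_t_def
  by (rule exI[of _ 1], rule exI[of _ 0], rule exI[of _ 0], rule exI[of _ 0]) simp
lemma Nadd: "nonneg_t (a::'a) \<Longrightarrow> nonneg_t b \<Longrightarrow> nonneg_t (a+b)" using F9[OF k1 ee dp] by blast
lemma Nmult: "nonneg_t (a::'a) \<Longrightarrow> nonneg_t b \<Longrightarrow> nonneg_t (a*b)"
  unfolding nonneg_t_def using euler4 by metis
lemma Ntot: "nonneg_t (a::'a) \<or> nonneg_t (-a)" using F7[OF k1 ee dp] by blast
lemma Nanti: "nonneg_t (a::'a) \<Longrightarrow> nonneg_t (-a) \<Longrightarrow> a = 0" using F8[OF k1 ee dp] by blast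

definition E :: "'a \<Rightarrow> 'a" where "E i = kpow p k i"

lemma E_sat: "nonneg_t i \<Longrightarrow> rfm_sat (env3 (E i) (of_int k) i) p"
proof -
  assume "nonneg_t i"
  then have "\<exists>!x. rfm_sat (env3 x (of_int k) i) p" using F2[OF k1 ee dp] F3[OF k1 ee dp] by blast
  then show ?thesis unfolding E_def kpow_def by (rule theI')
qed

lemma E_eq: "nonneg_t i \<Longrightarrow> rfm_sat (env3 x (of_int k) i) p \<Longrightarrow> E i = x"
  using E_sat F3[OF k1 ee dp] by blast

lemma E0: "E 0 = 1" using E_eq[OF N0 F4[OF k1 ee dp]] .

lemma E_add: "nonneg_t i \<Longrightarrow> nonneg_t j \<Longrightarrow> E (i+j) = E i * E j"
  using E_eq[OF Nadd] F5[OF k1 ee dp] E_sat by blast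

lemma E_nz: "nonneg_t i \<Longrightarrow> E i \<noteq> 0"
  using F6[OF k1 ee dp] E_sat by fastforce

lemma E_one: "nonneg_t m \<Longrightarrow> E m = 1 \<Longrightarrow> m = 0"
  using F10[OF k1 ee dp] E_sat by fastforce

lemma E_div: "nonneg_t s \<Longrightarrow> nonneg_t t \<Longrightarrow> \<exists>q. q * E s + 1 = E (s*t) + q"
proof -
  assume a: "nonneg_t s" "nonneg_t t"
  then obtain q x y where "rfm_sat (env3 x (of_int k) s) p" "rfm_sat (env3 y (of_int k) (s*t)) p"
      "q*x + 1 = y + q" using F11[OF k1 ee dp] by blast
  moreover have "nonneg_t (s*t)" using Nmult a by blast
  ultimately show ?thesis using E_eq a by blast
qed

lemma nzdE: "nonneg_t i \<Longrightarrow> nzd (E i)" using nzdI E_nz by blast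

definition Phi :: "'a \<Rightarrow> 'a \<Rightarrow> 'a tfrac" where "Phi a i = TFract a (E i)"
definition iota :: "'a \<Rightarrow> 'a tfrac" where "iota a = TFract a 1"
definition V :: "'a \<Rightarrow> 'a tfrac" where "V i = TFract 1 (E i)"
definition U :: "'a \<Rightarrow> 'a tfrac" where "U m = (if nonneg_t m then V m else iota (E (-m)))"

lemma Phi_eq: "nonneg_t i \<Longrightarrow> nonneg_t j \<Longrightarrow> Phi a i = Phi b j \<longleftrightarrow> a * E j = b * E i"
  unfolding Phi_def by (simp add: eq_tfract nzdE)

lemma Phi_add: "nonneg_t i \<Longrightarrow> nonneg_t j \<Longrightarrow> Phi a i + Phi b j = Phi (a * E j + b * E i) (i+j)"
  unfolding Phi_def by (simp add: nzdE E_add)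

lemma Phi_mult: "nonneg_t i \<Longrightarrow> nonneg_t j \<Longrightarrow> Phi a i * Phi b j = Phi (a*b) (i+j)"
  unfolding Phi_def by (simp add: nzdE E_add)

lemma Phi_neg: "nonneg_t i \<Longrightarrow> - Phi a i = Phi (-a) i"
  unfolding Phi_def by (simp add: nzdE)

lemma iota_Phi: "iota a = Phi a 0" unfolding iota_def Phi_def E0 ..

lemma V_Phi: "V i = Phi 1 i" unfolding V_def Phi_def ..

lemma iota_add: "iota (a + b) = iota a + iota b" unfolding iota_def by simp
lemma iota_mult: "iota (a * b) = iota a * iota b" unfolding iota_def by simp
lemma iota_1: "iota 1 = 1" unfolding iota_def One_tfrac_def ..
lemma iota_0: "iota 0 = 0" unfolding iota_def Zero_tfrac_def ..
lemma Phi_00: "Phi 0 0 = 0" unfolding Phi_def E0 Zero_tfrac_def ..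

lemma iota_V: "nonneg_t i \<Longrightarrow> iota (E i) * V i = 1"
  unfolding iota_def V_def One_tfrac_def by (simp add: nzdE eq_tfract)

lemma V_add: "nonneg_t i \<Longrightarrow> nonneg_t j \<Longrightarrow> V (i+j) = V i * V j"
  unfolding V_Phi by (simp add: Phi_mult)

lemma U_diff: "nonneg_t a \<Longrightarrow> nonneg_t b \<Longrightarrow> U (a - b) = V a * iota (E b)"
proof -
  assume a: "nonneg_t a" "nonneg_t b"
  show ?thesis
  proof (cases "nonneg_t (a - b)")
    case True
    have "E a = E (a - b) * E b" using E_add[OF True a(2)] by simp
    then show ?thesis using True a unfolding U_def V_def iota_def
      by (simp add: nzdE nzd_mult eq_tfract algebra_simps)
  next
    case False
    then have n: "nonneg_t (b - a)" using Ntot[of "a - b"] by simp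
    have "E b = E (b - a) * E a" using E_add[OF n a(1)] by simp
    then show ?thesis using False a unfolding U_def V_def iota_def
      by (simp add: nzdE nzd_mult eq_tfract algebra_simps)
  qed
qed

lemma U_split: "\<exists>a b. nonneg_t a \<and> nonneg_t b \<and> (m::'a) = a - b"
proof (cases "nonneg_t m")
  case True then show ?thesis using N0 by (rule_tac x=m in exI, rule_tac x=0 in exI) simp
next
  case False
  then have "nonneg_t (-m)" "m = 0 - (-m)" using Ntot[of m] by auto
  then show ?thesis using N0 by blast
qed

lemma U_add: "U (m + n) = U m * U n"
proof -
  obtain a b where ab: "nonneg_t a" "nonneg_t b" "m = a - b" using U_split by blast
  obtain c d where cd: "nonneg_t c" "nonneg_t d" "n = c - d" using U_split by blast
  have "m + n = (a + c) - (b + d)" using ab cd by simp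
  moreover have "U ((a + c) - (b + d)) = V (a + c) * iota (E (b + d))"
    using U_diff Nadd ab cd by blast
  ultimately have "U (m + n) = V (a + c) * iota (E (b + d))" by simp
  also have "\<dots> = (V a * iota (E b)) * (V c * iota (E d))"
    using ab cd by (simp add: V_add E_add iota_mult algebra_simps)
  finally show ?thesis using U_diff ab cd by simp
qed

lemma U_0: "U 0 = 1" unfolding U_def V_Phi using N0 Phi_eq[OF N0 N0] E0
  by (simp add: Phi_def One_tfrac_def)

lemma U_inv: "U m * U (-m) = 1" using U_add[of m "-m"] U_0 by simp

lemma Qdom: "(x::'a tfrac) * y = 0 \<longleftrightarrow> x = 0 \<or> y = 0"
proof -
  obtain a b where x: "x = TFract a b" "nzd b" by (rule TFract_cases)
  obtain c d where y: "y = TFract c d" "nzd d" by (rule TFract_cases)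
  have "x * y = 0 \<longleftrightarrow> a * c = 0" using x y by (simp add: Zero_tfrac_def eq_tfract nzd_mult)
  also have "\<dots> \<longleftrightarrow> a = 0 \<or> c = 0" by (rule dom)
  also have "\<dots> \<longleftrightarrow> x = 0 \<or> y = 0" using x y by (simp add: Zero_tfrac_def eq_tfract)
  finally show ?thesis .
qed

lemma Qcancel: "(c::'a tfrac) \<noteq> 0 \<Longrightarrow> a * c = b * c \<Longrightarrow> a = b"
proof -
  assume "c \<noteq> 0" "a * c = b * c"
  then have "(a - b) * c = 0" by (simp add: algebra_simps)
  then show "a = b" using Qdom \<open>c \<noteq> 0\<close> by simp
qed

lemma U_ne1: "m \<noteq> 0 \<Longrightarrow> 1 - U m \<noteq> 0"
proof
  assume m: "m \<noteq> 0" and "1 - U m = 0"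
  then have u: "U m = 1" by simp
  show False
  proof (cases "nonneg_t m")
    case True
    then have "Phi 1 m = Phi 1 0" using u unfolding U_def V_Phi by (simp add: iota_Phi[symmetric] iota_1)
    then have "E m = 1" using Phi_eq[OF True N0] E0 by simp
    then show False using E_one True m by blast
  next
    case False
    then have n: "nonneg_t (-m)" using Ntot by blast
    then have "Phi (E (-m)) 0 = Phi 1 0" using u False unfolding U_def by (simp add: iota_Phi[symmetric] iota_1)
    then have "E (-m) = 1" using Phi_eq[OF N0 N0] E0 by simp
    then show False using E_one n m by fastforce
  qed
qed

definition Fset :: "'a tfrac set" where "Fset = {Phi a i | a i. nonneg_t i}"

lemma FsetI: "nonneg_t i \<Longrightarrow> Phi a i \<in> Fset" unfolding Fset_def by blast
lemma FsetE: "x \<in> Fset \<Longrightarrow> (\<And>a i. nonneg_t i \<Longrightarrow> x = Phi a i \<Longrightarrow> P) \<Longrightarrow> P"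
  unfolding Fset_def by blast

lemma Fset_add: "x \<in> Fset \<Longrightarrow> y \<in> Fset \<Longrightarrow> x + y \<in> Fset"
  by (auto elim!: FsetE simp: Phi_add intro!: FsetI Nadd)
lemma Fset_mult: "x \<in> Fset \<Longrightarrow> y \<in> Fset \<Longrightarrow> x * y \<in> Fset"
  by (auto elim!: FsetE simp: Phi_mult intro!: FsetI Nadd)
lemma Fset_neg: "x \<in> Fset \<Longrightarrow> - x \<in> Fset"
  by (auto elim!: FsetE simp: Phi_neg intro!: FsetI)
lemma Fset_diff: "x \<in> Fset \<Longrightarrow> y \<in> Fset \<Longrightarrow> x - y \<in> Fset"
  using Fset_add Fset_neg by (metis diff_conv_add_uminus)
lemma Fset_iota: "iota a \<in> Fset" unfolding iota_Phi by (rule FsetI[OF N0])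
lemma Fset_0: "0 \<in> Fset" using Fset_iota[of 0] iota_0 by simp
lemma Fset_1: "1 \<in> Fset" using Fset_iota[of 1] iota_1 by simp
lemma Fset_U: "U m \<in> Fset"
  unfolding U_def V_Phi using FsetI Fset_iota by auto


definition cls :: "'a tfrac \<Rightarrow> ('a \<times> 'a) set" where
  "cls y = {r \<in> frac_reps. Phi (fst r) (snd r) = y}"

lemma reps_iff[simp]: "(a, i) \<in> frac_reps \<longleftrightarrow> nonneg_t i" unfolding frac_reps_def by simp

lemma cls_iff: "(a, i) \<in> cls y \<longleftrightarrow> nonneg_t i \<and> Phi a i = y" unfolding cls_def by simp

lemma kpow_E: "kpow p k = E" unfolding E_def[abs_def] ..

lemma rel_iff: "frac_rel p k (a, i) (b, j) \<longleftrightarrow> a * E j = b * E i"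
proof
  assume "frac_rel p k (a, i) (b, j)"
  then obtain u where u: "nonneg_t u" "E u * (a * E j - b * E i) = 0"
    unfolding frac_rel_def kpow_E by auto
  then have "a * E j - b * E i = 0" using E_nz dom by blast
  then show "a * E j = b * E i" by simp
next
  assume "a * E j = b * E i"
  then show "frac_rel p k (a, i) (b, j)" unfolding frac_rel_def kpow_E using N0 E0
    by (auto intro!: exI[of _ 0])
qed

lemma rel_Phi: "nonneg_t i \<Longrightarrow> nonneg_t j \<Longrightarrow> frac_rel p k (a, i) (b, j) \<longleftrightarrow> Phi a i = Phi b j"
  by (simp add: rel_iff Phi_eq)

lemma class_cls: "nonneg_t i \<Longrightarrow> frac_class p k (a, i) = cls (Phi a i)"
  unfolding frac_class_def by (auto simp: cls_iff rel_Phi)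

lemma fracs_cls: "fracs p k = cls ` Fset"
proof
  show "fracs p k \<subseteq> cls ` Fset"
    unfolding fracs_def frac_reps_def using class_cls FsetI by auto
  show "cls ` Fset \<subseteq> fracs p k"
  proof
    fix X assume "X \<in> cls ` Fset"
    then obtain a i where "nonneg_t i" "X = cls (Phi a i)" by (auto elim: FsetE)
    then show "X \<in> fracs p k" unfolding fracs_def using class_cls[of i a] by force
  qed
qed

lemma cls_rep: "x \<in> Fset \<Longrightarrow> \<exists>a i. nonneg_t i \<and> x = Phi a i \<and> (a, i) \<in> cls x"
  by (auto elim!: FsetE simp: cls_iff)

lemma cls_inj: "x \<in> Fset \<Longrightarrow> y \<in> Fset \<Longrightarrow> cls x = cls y \<Longrightarrow> x = y"
proof -
  assume x: "x \<in> Fset" and "y \<in> Fset" "cls x = cls y"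
  obtain a i where "nonneg_t i" "x = Phi a i" "(a, i) \<in> cls x" using cls_rep[OF x] by blast
  then have "(a, i) \<in> cls y" using \<open>cls x = cls y\<close> by simp
  then show "x = y" using \<open>x = Phi a i\<close> by (simp add: cls_iff)
qed

definition psi :: "('a \<times> 'a) set \<Rightarrow> 'a tfrac" where
  "psi X = (SOME y. y \<in> Fset \<and> X = cls y)"

lemma psi_cls: "x \<in> Fset \<Longrightarrow> psi (cls x) = x"
proof -
  assume x: "x \<in> Fset"
  have "psi (cls x) \<in> Fset \<and> cls x = cls (psi (cls x))"
    unfolding psi_def by (rule someI[of _ x]) (simp add: x)
  then show ?thesis using cls_inj x by metis
qed

lemma frac_add_cls:
  assumes x: "x \<in> Fset" and y: "y \<in> Fset"
  shows "frac_add p k (cls x) (cls y) = cls (x + y)"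
proof -
  obtain a0 i0 where r0: "nonneg_t i0" "x = Phi a0 i0" "(a0, i0) \<in> cls x" using cls_rep[OF x] by blast
  obtain b0 j0 where s0: "nonneg_t j0" "y = Phi b0 j0" "(b0, j0) \<in> cls y" using cls_rep[OF y] by blast
  show ?thesis
  proof (rule Set.set_eqI)
    fix r :: "'a \<times> 'a"
    obtain c l where r: "r = (c, l)" by (cases r)
    have "r \<in> frac_add p k (cls x) (cls y) \<longleftrightarrow> nonneg_t l \<and> (\<exists>a i b j. nonneg_t i \<and> Phi a i = x \<and>
        nonneg_t j \<and> Phi b j = y \<and> frac_rel p k (a * kpow p k j + b * kpow p k i, i + j) (c, l))"
      unfolding frac_add_def r by (auto simp: cls_iff)
    also have "\<dots> \<longleftrightarrow> nonneg_t l \<and> (\<exists>a i b j. nonneg_t i \<and> Phi a i = x \<and>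
        nonneg_t j \<and> Phi b j = y \<and> Phi c l = x + y)"
    proof -
      have "\<And>a i b j. nonneg_t i \<Longrightarrow> nonneg_t j \<Longrightarrow> nonneg_t l \<Longrightarrow>
          frac_rel p k (a * kpow p k j + b * kpow p k i, i + j) (c, l) \<longleftrightarrow> Phi c l = Phi a i + Phi b j"
        by (auto simp add: kpow_E rel_Phi Nadd Phi_add)
      then show ?thesis by blast
    qed
    also have "\<dots> \<longleftrightarrow> nonneg_t l \<and> Phi c l = x + y"
      using r0(1) s0(1) r0(2)[symmetric] s0(2)[symmetric] by blast
    also have "\<dots> \<longleftrightarrow> r \<in> cls (x + y)" unfolding r cls_iff ..
    finally show "r \<in> frac_add p k (cls x) (cls y) \<longleftrightarrow> r \<in> cls (x + y)" .
  qed
qed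

lemma scale_Phi:
  assumes i: "nonneg_t i" and l: "nonneg_t l"
  shows "(if nonneg_t m then frac_rel p k (a, i + m) (c, l) else frac_rel p k (a * kpow p k (- m), i) (c, l))
   \<longleftrightarrow> U m * Phi a i = Phi c l"
proof -
  show ?thesis
  proof (cases "nonneg_t m")
    case True
    have "U m * Phi a i = Phi a (i + m)" unfolding U_def V_Phi using True i
      by (simp add: Phi_mult add.commute)
    then show ?thesis using True i l by (simp add: rel_Phi Nadd)
  next
    case False
    then have n: "nonneg_t (-m)" using Ntot by blast
    have "U m * Phi a i = Phi (a * E (-m)) i" unfolding U_def iota_Phi using False i n
      by (simp add: Phi_mult N0 mult.commute)
    then show ?thesis using False i l by (simp add: rel_Phi kpow_E)
  qed
qed

lemma frac_scale_cls:
  assumes x: "x \<in> Fset"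
  shows "frac_scale p k m (cls x) = cls (U m * x)"
proof -
  obtain a0 i0 where r0: "nonneg_t i0" "x = Phi a0 i0" "(a0, i0) \<in> cls x" using cls_rep[OF x] by blast
  show ?thesis
  proof (rule Set.set_eqI)
    fix r :: "'a \<times> 'a"
    obtain c l where r: "r = (c, l)" by (cases r)
    have "r \<in> frac_scale p k m (cls x) \<longleftrightarrow> nonneg_t l \<and> (\<exists>a i. nonneg_t i \<and> Phi a i = x \<and>
       (if nonneg_t m then frac_rel p k (a, i + m) (c, l) else frac_rel p k (a * kpow p k (- m), i) (c, l)))"
      unfolding frac_scale_def r by (auto simp: cls_iff)
    also have "\<dots> \<longleftrightarrow> nonneg_t l \<and> (\<exists>a i. nonneg_t i \<and> Phi a i = x \<and> Phi c l = U m * x)"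
    proof -
      have key: "\<And>a i. nonneg_t i \<Longrightarrow> nonneg_t l \<Longrightarrow>
         (if nonneg_t m then frac_rel p k (a, i + m) (c, l) else frac_rel p k (a * kpow p k (- m), i) (c, l))
          \<longleftrightarrow> Phi c l = U m * Phi a i"
        using scale_Phi by (metis (no_types))
      show ?thesis
      proof
        assume "nonneg_t l \<and> (\<exists>a i. nonneg_t i \<and> Phi a i = x \<and>
          (if nonneg_t m then frac_rel p k (a, i + m) (c, l) else frac_rel p k (a * kpow p k (- m), i) (c, l)))"
        then obtain a i where "nonneg_t l" "nonneg_t i" "Phi a i = x"
          "(if nonneg_t m then frac_rel p k (a, i + m) (c, l) else frac_rel p k (a * kpow p k (- m), i) (c, l))"
          by blast
        then show "nonneg_t l \<and> (\<exists>a i. nonneg_t i \<and> Phi a i = x \<and> Phi c l = U m * x)"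
          using key by blast
      next
        assume "nonneg_t l \<and> (\<exists>a i. nonneg_t i \<and> Phi a i = x \<and> Phi c l = U m * x)"
        then obtain a i where "nonneg_t l" "nonneg_t i" "Phi a i = x" "Phi c l = U m * x"
          by blast
        then show "nonneg_t l \<and> (\<exists>a i. nonneg_t i \<and> Phi a i = x \<and>
          (if nonneg_t m then frac_rel p k (a, i + m) (c, l) else frac_rel p k (a * kpow p k (- m), i) (c, l)))"
          using key by blast
      qed
    qed
    also have "\<dots> \<longleftrightarrow> nonneg_t l \<and> Phi c l = U m * x" using r0(1) r0(2)[symmetric] by blast
    also have "\<dots> \<longleftrightarrow> r \<in> cls (U m * x)" unfolding r cls_iff ..
    finally show "r \<in> frac_scale p k m (cls x) \<longleftrightarrow> r \<in> cls (U m * x)" .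
  qed
qed

lemma BS_carrier: "carrier (BS p k) = cls ` Fset \<times> UNIV"
  unfolding BS_def by (simp add: fracs_cls)

lemma BS_mult: "x \<in> Fset \<Longrightarrow> y \<in> Fset \<Longrightarrow>
   (cls x, m) \<otimes>\<^bsub>BS p k\<^esub> (cls y, n) = (cls (x + U m * y), m + n)"
  unfolding BS_def by (simp add: frac_scale_cls frac_add_cls Fset_mult Fset_U)

lemma BS_one: "\<one>\<^bsub>BS p k\<^esub> = (cls 0, 0)"
  unfolding BS_def using class_cls[OF N0, of 0] Phi_00 by simp

lemma BS_memE: "g \<in> carrier (BS p k) \<Longrightarrow> (\<And>x m. x \<in> Fset \<Longrightarrow> g = (cls x, m) \<Longrightarrow> P) \<Longrightarrow> P"
  unfolding BS_carrier by auto

lemma BS_memI: "x \<in> Fset \<Longrightarrow> (cls x, m) \<in> carrier (BS p k)"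
  unfolding BS_carrier by auto

lemma BS_group: "group (BS p k :: (('a \<times> 'a) set \<times> 'a) monoid)"
proof (rule groupI)
  fix g h :: "('a \<times> 'a) set \<times> 'a" assume "g \<in> carrier (BS p k)" "h \<in> carrier (BS p k)"
  then show "g \<otimes>\<^bsub>BS p k\<^esub> h \<in> carrier (BS p k)"
    by (auto elim!: BS_memE simp: BS_mult intro!: BS_memI Fset_add Fset_mult Fset_U)
next
  have "(cls 0, 0) \<in> carrier (BS p k)" by (rule BS_memI[OF Fset_0])
  then show "\<one>\<^bsub>BS p k\<^esub> \<in> carrier (BS p k :: (('a \<times> 'a) set \<times> 'a) monoid)" by (simp only: BS_one)
next
  fix g h f :: "('a \<times> 'a) set \<times> 'a" assume "g \<in> carrier (BS p k)" "h \<in> carrier (BS p k)" "f \<in> carrier (BS p k)"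
  then show "g \<otimes>\<^bsub>BS p k\<^esub> h \<otimes>\<^bsub>BS p k\<^esub> f = g \<otimes>\<^bsub>BS p k\<^esub> (h \<otimes>\<^bsub>BS p k\<^esub> f)"
    by (auto elim!: BS_memE simp: BS_mult Fset_add Fset_mult Fset_U U_add algebra_simps)
next
  fix g :: "('a \<times> 'a) set \<times> 'a" assume "g \<in> carrier (BS p k)"
  then show "\<one>\<^bsub>BS p k\<^esub> \<otimes>\<^bsub>BS p k\<^esub> g = g"
    by (auto elim!: BS_memE simp: BS_one BS_mult Fset_0 U_0)
next
  fix g :: "('a \<times> 'a) set \<times> 'a" assume "g \<in> carrier (BS p k)"
  then obtain x m where x: "x \<in> Fset" "g = (cls x, m)" by (rule BS_memE)
  have "(cls (- (U (-m) * x)), -m) \<otimes>\<^bsub>BS p k\<^esub> g = \<one>\<^bsub>BS p k\<^esub>"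
    using x by (simp add: BS_mult BS_one Fset_neg Fset_mult Fset_U)
  moreover have "(cls (- (U (-m) * x)), -m) \<in> carrier (BS p k)"
    using x by (intro BS_memI Fset_neg Fset_mult Fset_U)
  ultimately show "\<exists>y\<in>carrier (BS p k). y \<otimes>\<^bsub>BS p k\<^esub> g = \<one>\<^bsub>BS p k\<^esub>" by blast
qed

lemma BS_inv:
  assumes x: "x \<in> Fset"
  shows "inv\<^bsub>BS p k\<^esub> (cls x, m) = (cls (- (U (-m) * x)), -m)"
proof -
  have "(cls (- (U (-m) * x)), -m) \<otimes>\<^bsub>BS p k\<^esub> (cls x, m) = \<one>\<^bsub>BS p k\<^esub>"
    using x by (simp add: BS_mult BS_one Fset_neg Fset_mult Fset_U)
  then show ?thesis using group.inv_equality[OF BS_group] x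
    by (simp add: BS_memI Fset_neg Fset_mult Fset_U)
qed


lemma Fset_V: "nonneg_t i \<Longrightarrow> V i \<in> Fset" unfolding V_Phi by (rule FsetI)

lemma dv1:
  assumes s: "nonneg_t s" and t: "nonneg_t t"
  shows "\<exists>z\<in>Fset. z * (1 - U s) = 1 - U (s*t)"
proof -
  obtain q where q: "q * E s + 1 = E (s*t) + q" using E_div[OF s t] by blast
  have st: "nonneg_t (s*t)" using Nmult s t by blast
  have Us: "U s = V s" "U (s*t) = V (s*t)" unfolding U_def using s st by auto
  have h1: "iota (E s) * V s = 1" by (rule iota_V[OF s])
  have h2: "iota (E (s*t)) * V (s*t) = 1" by (rule iota_V[OF st])
  have "iota (q * E s + 1) = iota (E (s*t) + q)" using q by simp
  then have h3: "iota q * iota (E s) = iota (E (s*t)) + iota q - 1"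
    by (simp add: iota_add iota_mult iota_1 algebra_simps)
  define z where "z = V (s*t) * iota q * iota (E s)"
  have "z * (1 - V s) = V (s*t) * (iota q * iota (E s)) - V (s*t) * iota q * (iota (E s) * V s)"
    unfolding z_def by (simp add: algebra_simps)
  also have "\<dots> = V (s*t) * (iota (E (s*t)) + iota q - 1) - V (s*t) * iota q"
    by (simp only: h1 h3) simp
  also have "\<dots> = iota (E (s*t)) * V (s*t) - V (s*t)" by (simp add: algebra_simps)
  also have "\<dots> = 1 - V (s*t)" by (simp only: h2)
  finally have "z * (1 - U s) = 1 - U (s*t)" unfolding Us .
  moreover have "z \<in> Fset" unfolding z_def using st s
    by (intro Fset_mult Fset_V Fset_iota)
  ultimately show ?thesis by blast
qed

lemma dv_negT:
  assumes "\<exists>z\<in>Fset. z * d = 1 - U n"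
  shows "\<exists>z\<in>Fset. z * d = 1 - U (-n)"
proof -
  obtain z where z: "z \<in> Fset" "z * d = 1 - U n" using assms by blast
  have "(- U (-n) * z) * d = - U (-n) * (z * d)" by (simp add: algebra_simps)
  also have "\<dots> = - U (-n) + U n * U (-n)" unfolding z(2) by (simp add: algebra_simps)
  also have "\<dots> = 1 - U (-n)" using U_inv[of n] by simp
  finally show ?thesis using z(1) by (intro bexI[of _ "- U (-n) * z"]) (auto intro: Fset_mult Fset_neg Fset_U)
qed

lemma dv_negD:
  assumes "\<exists>z\<in>Fset. z * (1 - U s) = T"
  shows "\<exists>z\<in>Fset. z * (1 - U (-s)) = T"
proof -
  obtain z where z: "z \<in> Fset" "z * (1 - U s) = T" using assms by blast
  have "(- z * U s) * (1 - U (-s)) = - z * U s + z * (U s * U (-s))" by (simp add: algebra_simps)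
  also have "\<dots> = z * (1 - U s)" using U_inv[of s] by (simp add: algebra_simps)
  finally show ?thesis using z by (intro bexI[of _ "- z * U s"]) (auto intro: Fset_mult Fset_neg Fset_U)
qed

lemma dv_all: "\<exists>z\<in>Fset. z * (1 - U m) = 1 - U (\<alpha> * m)"
proof (cases "nonneg_t m")
  case mT: True
  show ?thesis
  proof (cases "nonneg_t \<alpha>")
    case True
    have e: "\<alpha> * m = m * \<alpha>" by (rule mult.commute)
    show ?thesis unfolding e by (rule dv1[OF mT True])
  next
    case False
    then have a: "nonneg_t (-\<alpha>)" using Ntot by blast
    have e: "\<alpha> * m = - (m * (-\<alpha>))" by simp
    show ?thesis unfolding e by (rule dv_negT[OF dv1[OF mT a]])
  qed
next
  case mF: False
  then have mn: "nonneg_t (-m)" using Ntot by blast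
  show ?thesis
  proof (cases "nonneg_t \<alpha>")
    case True
    have e: "\<alpha> * m = - ((-m) * \<alpha>)" by simp
    show ?thesis using dv_negD[OF dv_negT[OF dv1[OF mn True]]] unfolding e by simp
  next
    case False
    then have a: "nonneg_t (-\<alpha>)" using Ntot by blast
    have e: "\<alpha> * m = (-m) * (-\<alpha>)" by simp
    show ?thesis using dv_negD[OF dv1[OF mn a]] unfolding e by simp
  qed
qed

definition pwQ :: "'a tfrac \<Rightarrow> 'a \<Rightarrow> 'a \<Rightarrow> 'a tfrac" where
  "pwQ x m \<alpha> = (if m = 0 then iota \<alpha> * x else (THE y. y * (1 - U m) = x * (1 - U (\<alpha> * m))))"

lemma pwQ_prop:
  assumes x: "x \<in> Fset" and m: "m \<noteq> 0"
  shows "pwQ x m \<alpha> \<in> Fset \<and> pwQ x m \<alpha> * (1 - U m) = x * (1 - U (\<alpha> * m))"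
proof -
  obtain z where z: "z \<in> Fset" "z * (1 - U m) = 1 - U (\<alpha> * m)" using dv_all by blast
  have ex: "(x * z) * (1 - U m) = x * (1 - U (\<alpha> * m))" using z(2) by (simp add: mult.assoc)
  have un: "\<And>y. y * (1 - U m) = x * (1 - U (\<alpha> * m)) \<Longrightarrow> y = x * z"
    using Qcancel[OF U_ne1[OF m]] ex by metis
  have "(THE y. y * (1 - U m) = x * (1 - U (\<alpha> * m))) = x * z"
  proof (rule the_equality)
    show "(x * z) * (1 - U m) = x * (1 - U (\<alpha> * m))" by (rule ex)
  next
    fix y assume "y * (1 - U m) = x * (1 - U (\<alpha> * m))"
    then show "y = x * z" by (rule un)
  qed
  then have "pwQ x m \<alpha> = x * z" unfolding pwQ_def using m by simp
  then show ?thesis using ex x z(1) Fset_mult by simp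
qed

lemma pwQ_uniq:
  assumes x: "x \<in> Fset" and m: "m \<noteq> 0" and y: "y * (1 - U m) = x * (1 - U (\<alpha> * m))"
  shows "pwQ x m \<alpha> = y"
  using Qcancel[OF U_ne1[OF m]] pwQ_prop[OF x m] y by metis

lemma pwQ_zero[simp]: "pwQ x 0 \<alpha> = iota \<alpha> * x" unfolding pwQ_def by simp

lemma pwQ_Fset: "x \<in> Fset \<Longrightarrow> pwQ x m \<alpha> \<in> Fset"
  using pwQ_prop by (cases "m = 0") (auto intro: Fset_mult Fset_iota)

lemma A1: "x \<in> Fset \<Longrightarrow> pwQ x m 1 = x"
  by (cases "m = 0") (auto simp: iota_1 intro: pwQ_uniq)

lemma A0: "x \<in> Fset \<Longrightarrow> pwQ x m 0 = 0"
  by (cases "m = 0") (auto simp: iota_0 U_0 intro: pwQ_uniq)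

lemma Aadd: "x \<in> Fset \<Longrightarrow> pwQ x m (\<alpha> + \<beta>) = pwQ x m \<alpha> + U (\<alpha> * m) * pwQ x m \<beta>"
proof (cases "m = 0")
  case True then show ?thesis by (simp add: U_0 iota_add algebra_simps)
next
  case False
  assume x: "x \<in> Fset"
  have hU: "U ((\<alpha> + \<beta>) * m) = U (\<alpha> * m) * U (\<beta> * m)" by (simp add: distrib_right U_add)
  have "(pwQ x m \<alpha> + U (\<alpha> * m) * pwQ x m \<beta>) * (1 - U m) = x * (1 - U (\<alpha> * m) * U (\<beta> * m))"
    by (rule r_add) (use pwQ_prop[OF x False] in blast)+
  then show ?thesis by (intro pwQ_uniq[OF x False]) (simp add: hU)
qed

lemma Amul: "x \<in> Fset \<Longrightarrow> pwQ x m (\<alpha> * \<beta>) = pwQ (pwQ x m \<alpha>) (\<alpha> * m) \<beta>"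
proof -
  assume x: "x \<in> Fset"
  show ?thesis
  proof (cases "m = 0")
    case True then show ?thesis by (simp add: iota_mult algebra_simps)
  next
    case m: False
    show ?thesis
    proof (cases "\<alpha> = 0")
      case True then show ?thesis using A0[OF x] by (simp add: iota_0)
    next
      case a: False
      have am: "\<alpha> * m \<noteq> 0" using a m dom by blast
      define Y where "Y = pwQ x m \<alpha>"
      have Y: "Y \<in> Fset" "Y * (1 - U m) = x * (1 - U (\<alpha> * m))" using pwQ_prop[OF x m] Y_def by auto
      define Z where "Z = pwQ Y (\<alpha> * m) \<beta>"
      have Z: "Z * (1 - U (\<alpha> * m)) = Y * (1 - U (\<alpha> * \<beta> * m))"
        using pwQ_prop[OF Y(1) am] Z_def by (simp add: mult_ac)
      have "(Z * (1 - U m)) * (1 - U (\<alpha> * m)) = (x * (1 - U (\<alpha> * \<beta> * m))) * (1 - U (\<alpha> * m))"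
        by (rule r_mul[OF Z Y(2)])
      then have "Z * (1 - U m) = x * (1 - U (\<alpha> * \<beta> * m))" by (rule Qcancel[OF U_ne1[OF am]])
      then have "pwQ x m (\<alpha> * \<beta>) = Z" by (intro pwQ_uniq[OF x m])
      then show ?thesis unfolding Z_def Y_def .
    qed
  qed
qed

lemma Aconj:
  assumes x: "x \<in> Fset" and z: "z \<in> Fset"
  shows "pwQ (U (-n) * (x - z + U m * z)) m \<alpha> = U (-n) * (pwQ x m \<alpha> - z + U (\<alpha> * m) * z)"
proof (cases "m = 0")
  case True then show ?thesis by (simp add: U_0 algebra_simps)
next
  case m: False
  have c: "U (-n) * (x - z + U m * z) \<in> Fset" using x z
    by (intro Fset_mult Fset_add Fset_diff Fset_U)
  show ?thesis using r_conj[OF conjunct2[OF pwQ_prop[OF x m]]]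
    by (intro pwQ_uniq[OF c m])
qed

lemma Acomm:
  assumes x: "x \<in> Fset" and y: "y \<in> Fset" and c: "x + U m * y = y + U n * x"
  shows "pwQ (x + U m * y) (m + n) \<alpha> = pwQ x m \<alpha> + U (\<alpha> * m) * pwQ y n \<alpha>"
proof -
  have h3: "y * (1 - U m) = x * (1 - U n)" using c by (simp add: algebra_simps)
  show ?thesis
  proof (cases "m = 0")
    case m0: True
    show ?thesis
    proof (cases "n = 0")
      case True then show ?thesis using m0 by (simp add: U_0 algebra_simps)
    next
      case n: False
      have "x * (1 - U n) = 0" using h3 m0 U_0 by simp
      then have "x = 0" using Qdom U_ne1[OF n] by blast
      then show ?thesis using m0 by (simp add: U_0)
    qed
  next
    case m: False
    show ?thesis
    proof (cases "n = 0")
      case n0: True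
      have "y * (1 - U m) = 0" using h3 n0 U_0 by simp
      then have "y = 0" using Qdom U_ne1[OF m] by blast
      then show ?thesis using n0 by simp
    next
      case n: False
      have Xa: "pwQ x m \<alpha> * (1 - U m) = x * (1 - U (\<alpha> * m))" using pwQ_prop[OF x m] by blast
      have Yb: "pwQ y n \<alpha> * (1 - U n) = y * (1 - U (\<alpha> * n))" using pwQ_prop[OF y n] by blast
      have L: "(pwQ x m \<alpha> + U (\<alpha> * m) * pwQ y n \<alpha>) * ((1 - U m) * (1 - U n))
               = x * (1 - U n) * (1 - U (\<alpha> * m) * U (\<alpha> * n))"
        by (rule r_commL[OF Xa Yb h3])
      have R: "(x + U m * y) * ((1 - U m) * (1 - U n)) = x * (1 - U n) * (1 - U m * U n)"
        by (rule r_commR[OF h3])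
      have cnz: "(1 - U m) * (1 - U n) \<noteq> 0" using U_ne1[OF m] U_ne1[OF n] Qdom by blast
      have xy: "x + U m * y \<in> Fset" using x y by (intro Fset_add Fset_mult Fset_U)
      have UU: "U (\<alpha> * m) * U (\<alpha> * n) = U (\<alpha> * (m + n))" "U m * U n = U (m + n)"
        by (simp_all add: U_add distrib_left)
      show ?thesis
      proof (cases "m + n = 0")
        case True
        have "(pwQ x m \<alpha> + U (\<alpha> * m) * pwQ y n \<alpha>) * ((1 - U m) * (1 - U n)) = 0"
          using L UU True U_0 by simp
        moreover have "(iota \<alpha> * (x + U m * y)) * ((1 - U m) * (1 - U n)) = 0"
          using R UU True U_0 by (simp add: mult.assoc)
        ultimately show ?thesis using True Qcancel[OF cnz] by simp
      next
        case mn: False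
        have "((pwQ x m \<alpha> + U (\<alpha> * m) * pwQ y n \<alpha>) * (1 - U (m + n))) * ((1 - U m) * (1 - U n))
            = ((x + U m * y) * (1 - U (\<alpha> * (m + n)))) * ((1 - U m) * (1 - U n))"
        proof -
          have "((pwQ x m \<alpha> + U (\<alpha> * m) * pwQ y n \<alpha>) * (1 - U (m + n))) * ((1 - U m) * (1 - U n))
              = ((pwQ x m \<alpha> + U (\<alpha> * m) * pwQ y n \<alpha>) * ((1 - U m) * (1 - U n))) * (1 - U (m + n))"
            by (simp add: mult_ac)
          also have "\<dots> = x * (1 - U n) * (1 - U (\<alpha> * (m + n))) * (1 - U (m + n))" using L UU by simp
          also have "\<dots> = ((x + U m * y) * ((1 - U m) * (1 - U n))) * (1 - U (\<alpha> * (m + n)))"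
            using R UU by (simp add: mult_ac)
          also have "\<dots> = ((x + U m * y) * (1 - U (\<alpha> * (m + n)))) * ((1 - U m) * (1 - U n))"
            by (simp add: mult_ac)
          finally show ?thesis .
        qed
        then have "(pwQ x m \<alpha> + U (\<alpha> * m) * pwQ y n \<alpha>) * (1 - U (m + n))
            = (x + U m * y) * (1 - U (\<alpha> * (m + n)))" by (rule Qcancel[OF cnz])
        then show ?thesis by (intro pwQ_uniq[OF xy mn]) simp
      qed
    qed
  qed
qed


definition pwB :: "('a \<times> 'a) set \<times> 'a \<Rightarrow> 'a \<Rightarrow> ('a \<times> 'a) set \<times> 'a" where
  "pwB g \<alpha> = (cls (pwQ (psi (fst g)) (snd g) \<alpha>), \<alpha> * snd g)"

lemma pwB_cls: "x \<in> Fset \<Longrightarrow> pwB (cls x, m) \<alpha> = (cls (pwQ x m \<alpha>), \<alpha> * m)"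
  by (simp add: pwB_def psi_cls)

lemma conj_form:
  assumes x: "x \<in> Fset" and z: "z \<in> Fset"
  shows "inv\<^bsub>BS p k\<^esub> (cls z, n) \<otimes>\<^bsub>BS p k\<^esub> (cls x, m) \<otimes>\<^bsub>BS p k\<^esub> (cls z, n)
       = (cls (U (-n) * (x - z + U m * z)), m)"
proof -
  have f1: "- (U (-n) * z) \<in> Fset" using z by (intro Fset_neg Fset_mult Fset_U)
  have f2: "- (U (-n) * z) + U (-n) * x \<in> Fset" using f1 x by (intro Fset_add Fset_mult Fset_U)
  have "inv\<^bsub>BS p k\<^esub> (cls z, n) \<otimes>\<^bsub>BS p k\<^esub> (cls x, m) \<otimes>\<^bsub>BS p k\<^esub> (cls z, n)
      = (cls (- (U (-n) * z) + U (-n) * x + U (-n + m) * z), -n + m + n)"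
    using x z f1 f2 by (simp add: BS_inv BS_mult)
  also have "\<dots> = (cls (- (U (-n) * z) + U (-n) * x + (U (-n) * U m) * z), m)"
    by (simp only: U_add[of "-n" m]) simp
  also have "\<dots> = (cls (U (-n) * (x - z + U m * z)), m)"
    by (simp add: algebra_simps)
  finally show ?thesis .
qed

lemma main_reg: "ring_exp_group (BS p k) pwB"
  unfolding ring_exp_group_def
proof (intro conjI ballI allI impI)
  show "group (BS p k :: (('a \<times> 'a) set \<times> 'a) monoid)" by (rule BS_group)
next
  fix g :: "('a \<times> 'a) set \<times> 'a" and \<alpha> :: 'a assume "g \<in> carrier (BS p k)"
  then show "pwB g \<alpha> \<in> carrier (BS p k)"
    by (auto elim!: BS_memE simp: pwB_cls intro!: BS_memI pwQ_Fset)
next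
  fix g :: "('a \<times> 'a) set \<times> 'a" assume "g \<in> carrier (BS p k)"
  then show "pwB g 1 = g" by (auto elim!: BS_memE simp: pwB_cls A1)
next
  fix g :: "('a \<times> 'a) set \<times> 'a" assume "g \<in> carrier (BS p k)"
  then show "pwB g 0 = \<one>\<^bsub>BS p k\<^esub>" by (auto elim!: BS_memE simp: pwB_cls A0 BS_one)
next
  fix \<alpha> :: 'a show "pwB \<one>\<^bsub>BS p k\<^esub> \<alpha> = \<one>\<^bsub>BS p k\<^esub>"
    by (simp add: BS_one pwB_cls Fset_0)
next
  fix g :: "('a \<times> 'a) set \<times> 'a" and \<alpha> \<beta> :: 'a assume "g \<in> carrier (BS p k)"
  then obtain x m where x: "x \<in> Fset" "g = (cls x, m)" by (rule BS_memE)
  show "pwB g (\<alpha> + \<beta>) = pwB g \<alpha> \<otimes>\<^bsub>BS p k\<^esub> pwB g \<beta>"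
    using x by (simp add: pwB_cls BS_mult pwQ_Fset Aadd distrib_right)
next
  fix g :: "('a \<times> 'a) set \<times> 'a" and \<alpha> \<beta> :: 'a assume "g \<in> carrier (BS p k)"
  then obtain x m where x: "x \<in> Fset" "g = (cls x, m)" by (rule BS_memE)
  show "pwB g (\<alpha> * \<beta>) = pwB (pwB g \<alpha>) \<beta>"
    using x by (simp add: pwB_cls pwQ_Fset Amul mult_ac)
next
  fix g h :: "('a \<times> 'a) set \<times> 'a" and \<alpha> :: 'a assume "g \<in> carrier (BS p k)" "h \<in> carrier (BS p k)"
  then obtain x m z n where x: "x \<in> Fset" "g = (cls x, m)" and z: "z \<in> Fset" "h = (cls z, n)"
    by (meson BS_memE)
  have "pwB (inv\<^bsub>BS p k\<^esub> h \<otimes>\<^bsub>BS p k\<^esub> g \<otimes>\<^bsub>BS p k\<^esub> h) \<alpha>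
      = (cls (pwQ (U (-n) * (x - z + U m * z)) m \<alpha>), \<alpha> * m)"
    using x z by (simp add: conj_form pwB_cls Fset_mult Fset_add Fset_diff Fset_U)
  also have "\<dots> = (cls (U (-n) * (pwQ x m \<alpha> - z + U (\<alpha> * m) * z)), \<alpha> * m)"
    using Aconj[OF x(1) z(1)] by simp
  also have "\<dots> = inv\<^bsub>BS p k\<^esub> h \<otimes>\<^bsub>BS p k\<^esub> pwB g \<alpha> \<otimes>\<^bsub>BS p k\<^esub> h"
    using x z by (simp add: conj_form pwB_cls pwQ_Fset)
  finally show "pwB (inv\<^bsub>BS p k\<^esub> h \<otimes>\<^bsub>BS p k\<^esub> g \<otimes>\<^bsub>BS p k\<^esub> h) \<alpha>
      = inv\<^bsub>BS p k\<^esub> h \<otimes>\<^bsub>BS p k\<^esub> pwB g \<alpha> \<otimes>\<^bsub>BS p k\<^esub> h" .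
next
  fix g h :: "('a \<times> 'a) set \<times> 'a" and \<alpha> :: 'a assume "g \<in> carrier (BS p k)" "h \<in> carrier (BS p k)"
    and c: "g \<otimes>\<^bsub>BS p k\<^esub> h = h \<otimes>\<^bsub>BS p k\<^esub> g"
  then obtain x m y n where x: "x \<in> Fset" "g = (cls x, m)" and y: "y \<in> Fset" "h = (cls y, n)"
    by (meson BS_memE)
  have "cls (x + U m * y) = cls (y + U n * x)" using c x y by (simp add: BS_mult)
  then have e: "x + U m * y = y + U n * x"
    using x y by (intro cls_inj) (auto intro: Fset_add Fset_mult Fset_U)
  show "pwB (g \<otimes>\<^bsub>BS p k\<^esub> h) \<alpha> = pwB g \<alpha> \<otimes>\<^bsub>BS p k\<^esub> pwB h \<alpha>"
    using x y Acomm[OF x(1) y(1) e]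
    by (simp add: BS_mult pwB_cls pwQ_Fset Fset_add Fset_mult Fset_U distrib_left)
qed

end

theorem theorem5p2:
  fixes k :: int and p :: rfm
  assumes "k > 1"
    and "elem_equiv_Z TYPE('a::comm_ring_1)"
    and "defines_exp_Z p"
  shows "\<exists>pw :: ('a \<times> 'a) set \<times> 'a \<Rightarrow> 'a \<Rightarrow> ('a \<times> 'a) set \<times> 'a.
           ring_exp_group (BS p k) pw"
  using main_reg[OF assms] by blast


end
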